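(* Let $c$ be any real number. For each finite-dimensional system $A$ and $\rho\in\mathfrak{S}(A)$ define $\Theta_\rho:\mathfrak{B}(A)\to\mathfrak{B}(A)$ by $\Theta_\rho(M)=\tfrac12\{\rho,M\}+ic[\rho,M]$, and define $\mathcal{E}_{B|A}\star\rho_A:=(\Theta_\rho\otimes\mathrm{id}_B)(\mathscr{D}[\mathcal{E}_{B|A}])$ for channels $\mathcal{E}_{B|A}$ and states $\rho_A$ (with action on subsystems defined by $\mathcal{E}\star\rho_{AE}:=((\mathcal{E}\star\cdot)\otimes\mathrm{id}_E)(\rho_{AE})$). Then $\star$ is a state over time function satisfying axioms (H), (E), (P), (CC), (J) and (QC).
   Context: All systems are finite-dimensional Hilbert spaces; a system may also be a subspace of a larger Hilbert space. $\mathfrak{B}(A)$: linear operators; $\mathfrak{S}(A)$: density operators; $\mathfrak{C}(A,B)$: quantum channels (CPTP maps $\mathfrak{B}(A)\to\mathfrak{B}(B)$). $|A|=\dim A$, $\mathbb{1}_A$ identity (also the projector onto $A$ when $A$ is a subspace), $\pi_A=\mathbb{1}_A/|A|$, $A'$ a copy of $A$, $F_{AA'}$ swap, $\mathrm{Ad}_X(Y)=XYX^\dagger$, $[X,Y]=XY-YX$, $\{X,Y\}=XY+YX$. $\mathcal{E}_{B|A'}$ is $\mathcal{E}_{B|A}$ acting on $A'$. Jamiołkowski state: $\mathscr{D}[\mathcal{E}]=(\mathrm{id}_A\otimes\mathcal{E}_{B|A'})(F_{AA'})$. A state over time function assigns to all systems $A,B$ a map $\star:\mathfrak{C}(A,B)\times\mathfrak{S}(A)\to\mathfrak{B}(A\otimes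 B)$ with $\mathrm{Tr}_A[\mathcal{E}\star\rho]=\mathcal{E}(\rho)$, $\mathrm{Tr}_B[\mathcal{E}\star\rho]=\rho$, extended homogeneously by $(\lambda\mathcal{E})\star\rho=\mathcal{E}\star(\lambda\rho)=\lambda(\mathcal{E}\star\rho)$ (so $\mathcal{E}\star\mathbb{1}_A=|A|\,\mathcal{E}\star\pi_A$). A quantum state over spacetime on $A\otimes E$ is a density operator or an operator of the form $\mathcal{F}\star\sigma$. (H): $\mathcal{E}\star\rho$ is Hermitian for all channels and states. (E): for all $A,B,E$, every quantum state over spacetime $\rho_{AE}$ and channel $\mathcal{E}_{B|A}$, $\mathcal{E}_{B|A}\star\rho_{AE}$ on $A\otimes B\otimes E$ is defined with $\mathcal{I}_E[\mathcal{E}\star\rho_{AE}]=\mathcal{E}\star\mathcal{I}_E(\rho_{AE})$ for every completely positive trace-non-increasing $\mathcal{I}_E$ on $E$, and $\mathrm{Tr}_A[\mathcal{E}\star\rho_{AE}]=(\mathcal{E}\otimes\mathrm{id}_E)(\rho_{AE})$. (P): $\mathrm{Tr}_B[\mathcal{F}_{C|B}\star(\mathcal{E}_{B|A}\star\rho_A)]=(\mathcal{F}\circ\mathcal{E})_{C|A}\star\rho_A$ for all channels $\mathcal{E}_{B|A},\mathcal{F}_{C|B}$ and states $\rho_A$, with $\mathcal{F}_{C|B}\star(\cdot)$ acting on the $B$-part (spectator $A$). (CC): for every orthogonal decomposition $A=\bigoplus_iA_i$, every channel $\mathcal{E}_{B|A}$ with $\mathcal{E}\circ(\sum_i\mathrm{Ad}_{\mathbb{1}_{A_i}})=\mathcal{E}$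 and every probability distribution $\{\lambda_i\}$: $\mathcal{E}\star(\sum_i\lambda_i\pi_{A_i})=\sum_i\lambda_i\,\mathcal{E}_{B|A_i}\star\pi_{A_i}$, with $\mathcal{E}_{B|A_i}=\mathcal{E}\circ\mathrm{Ad}_{\mathbb{1}_{A_i}}$ viewed as a channel from the subspace system $A_i$ to $B$. (J): for every system $A$, including subspaces of larger systems, and every channel: $\mathcal{E}_{B|A}\star\pi_A=|A|^{-1}\mathscr{D}[\mathcal{E}]$. (QC): for every $\rho\in\mathfrak{S}(A)$ there is a linear map $\Theta_\rho$ on $\mathfrak{B}(A)$ with $\mathcal{E}_{B|A}\star\rho_A=(\Theta_\rho\otimes\mathrm{id}_B)(\mathcal{E}_{B|A}\star\mathbb{1}_A)$ for all $\mathcal{E}\in\mathfrak{C}(A,B)$, and $\Theta_\rho(M)=\rho M$ whenever $[\rho,M]=0$. *)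

theory Defs
  imports "Jordan_Normal_Form.Matrix" Complex_Main
begin

text \<open>A system of dimension n is C^n; operators are complex n x n matrices
(JNF type complex mat).  The tensor product C^n (x) C^m is C^(n*m) with the basis
index convention (a,b) |-> a*m+b (Kronecker convention); for three factors
(a,b,c) |-> a*m*k + b*k + c.\<close>

definition adj :: "complex mat \<Rightarrow> complex mat" where
  "adj X = mat (dim_col X) (dim_row X) (\<lambda>(i,j). cnj (X $$ (j,i)))"

definition ctrace :: "complex mat \<Rightarrow> complex" where
  "ctrace X = (\<Sum>i<dim_row X. X $$ (i,i))"

definition kron :: "complex mat \<Rightarrow> complex mat \<Rightarrow> complex mat" where
  "kron X Y = mat (dim_row X * dim_row Y) (dim_col X * dim_col Y)
     (\<lambda>(i,j). X $$ (i div dim_row Y, j div dim_col Y) * Y $$ (i mod dim_row Y, j mod dim_col Y))"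

definition commutator :: "complex mat \<Rightarrow> complex mat \<Rightarrow> complex mat" where
  "commutator X Y = X * Y - Y * X"

definition anticommutator :: "complex mat \<Rightarrow> complex mat \<Rightarrow> complex mat" where
  "anticommutator X Y = X * Y + Y * X"

definition mat_sum :: "nat \<Rightarrow> nat \<Rightarrow> 'i set \<Rightarrow> ('i \<Rightarrow> complex mat) \<Rightarrow> complex mat" where
  "mat_sum n m I f = mat n m (\<lambda>ij. \<Sum>i\<in>I. f i $$ ij)"

definition psd :: "nat \<Rightarrow> complex mat \<Rightarrow> bool" where
  "psd n X \<longleftrightarrow> X \<in> carrier_mat n n \<and>
     (\<forall>v :: nat \<Rightarrow> complex.
        Im (\<Sum>i<n. \<Sum>j<n. cnj (v i) * X $$ (i,j) * v j) = 0 \<and>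
        0 \<le> Re (\<Sum>i<n. \<Sum>j<n. cnj (v i) * X $$ (i,j) * v j))"

definition density :: "nat \<Rightarrow> complex mat \<Rightarrow> bool" where
  "density n \<rho> \<longleftrightarrow> psd n \<rho> \<and> ctrace \<rho> = 1"

definition ptrace_fst :: "nat \<Rightarrow> nat \<Rightarrow> complex mat \<Rightarrow> complex mat" where
  "ptrace_fst n m R = mat m m (\<lambda>(j,l). \<Sum>i<n. R $$ (i*m+j, i*m+l))"

definition ptrace_snd :: "nat \<Rightarrow> nat \<Rightarrow> complex mat \<Rightarrow> complex mat" where
  "ptrace_snd n m R = mat n n (\<lambda>(i,k). \<Sum>j<m. R $$ (i*m+j, k*m+j))"

definition ptrace_mid :: "nat \<Rightarrow> nat \<Rightarrow> nat \<Rightarrow> complex mat \<Rightarrow> complex mat" where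
  "ptrace_mid n m k R = mat (n*k) (n*k) (\<lambda>(p,q).
     \<Sum>j<m. R $$ ((p div k)*(m*k) + j*k + p mod k, (q div k)*(m*k) + j*k + q mod k))"

text \<open>(Phi (x) id_k)(R) for Phi : B(C^n) -> B(C^m) and R on C^n (x) C^k.\<close>
definition tensor_id_right ::
  "nat \<Rightarrow> nat \<Rightarrow> nat \<Rightarrow> (complex mat \<Rightarrow> complex mat) \<Rightarrow> complex mat \<Rightarrow> complex mat" where
  "tensor_id_right n m k \<Phi> R = mat (m*k) (m*k) (\<lambda>(p,q).
     \<Phi> (mat n n (\<lambda>(i,i'). R $$ (i*k + p mod k, i'*k + q mod k))) $$ (p div k, q div k))"

text \<open>(id_k (x) Phi)(R) for Phi : B(C^n) -> B(C^m) and R on C^k (x) C^n.\<close>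
definition tensor_id_left ::
  "nat \<Rightarrow> nat \<Rightarrow> nat \<Rightarrow> (complex mat \<Rightarrow> complex mat) \<Rightarrow> complex mat \<Rightarrow> complex mat" where
  "tensor_id_left k n m \<Phi> R = mat (k*m) (k*m) (\<lambda>(p,q).
     \<Phi> (mat n n (\<lambda>(i,i'). R $$ ((p div m)*n + i, (q div m)*n + i'))) $$ (p mod m, q mod m))"

definition lin_map :: "nat \<Rightarrow> nat \<Rightarrow> (complex mat \<Rightarrow> complex mat) \<Rightarrow> bool" where
  "lin_map n m \<Phi> \<longleftrightarrow>
     (\<forall>X \<in> carrier_mat n n. \<Phi> X \<in> carrier_mat m m) \<and>
     (\<forall>X \<in> carrier_mat n n. \<forall>Y \<in> carrier_mat n n. \<Phi> (X + Y) = \<Phi> X + \<Phi> Y) \<and>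
     (\<forall>X \<in> carrier_mat n n. \<forall>a. \<Phi> (a \<cdot>\<^sub>m X) = a \<cdot>\<^sub>m \<Phi> X)"

definition cp_map :: "nat \<Rightarrow> nat \<Rightarrow> (complex mat \<Rightarrow> complex mat) \<Rightarrow> bool" where
  "cp_map n m \<Phi> \<longleftrightarrow> lin_map n m \<Phi> \<and>
     (\<forall>k R. psd (n*k) R \<longrightarrow> psd (m*k) (tensor_id_right n m k \<Phi> R))"

definition channel :: "nat \<Rightarrow> nat \<Rightarrow> (complex mat \<Rightarrow> complex mat) \<Rightarrow> bool" where
  "channel n m \<Phi> \<longleftrightarrow> cp_map n m \<Phi> \<and> (\<forall>X \<in> carrier_mat n n. ctrace (\<Phi> X) = ctrace X)"

definition cptni :: "nat \<Rightarrow> (complex mat \<Rightarrow> complex mat) \<Rightarrow> bool" where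
  "cptni n \<Phi> \<longleftrightarrow> cp_map n n \<Phi> \<and> (\<forall>X. psd n X \<longrightarrow> Re (ctrace (\<Phi> X)) \<le> Re (ctrace X))"

text \<open>Swap operator F on C^n (x) C^n, and the Jamiolkowski state (id (x) E)(F).\<close>
definition swap_op :: "nat \<Rightarrow> complex mat" where
  "swap_op n = mat (n*n) (n*n) (\<lambda>(p,q). if p div n = q mod n \<and> p mod n = q div n then 1 else 0)"

definition jamiolkowski :: "nat \<Rightarrow> nat \<Rightarrow> (complex mat \<Rightarrow> complex mat) \<Rightarrow> complex mat" where
  "jamiolkowski n m \<Phi> = tensor_id_left n n m \<Phi> (swap_op n)"

definition Theta :: "real \<Rightarrow> complex mat \<Rightarrow> complex mat \<Rightarrow> complex mat" where
  "Theta c \<rho> M = (1/2 :: complex) \<cdot>\<^sub>m anticommutator \<rho> M + (\<i> * complex_of_real c) \<cdot>\<^sub>m commutator \<rho> M"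

text \<open>E star rho on C^n (x) C^m (linear in rho, hence the homogeneous extension).\<close>
definition star :: "real \<Rightarrow> nat \<Rightarrow> nat \<Rightarrow> (complex mat \<Rightarrow> complex mat) \<Rightarrow> complex mat \<Rightarrow> complex mat" where
  "star c n m \<Phi> \<rho> = tensor_id_right n n m (Theta c \<rho>) (jamiolkowski n m \<Phi>)"

text \<open>Action with a spectator E on the right: E star rho_AE := ((E star .) (x) id_E)(rho_AE),
  living on A (x) B (x) E.\<close>
definition star_spec_right ::
  "real \<Rightarrow> nat \<Rightarrow> nat \<Rightarrow> nat \<Rightarrow> (complex mat \<Rightarrow> complex mat) \<Rightarrow> complex mat \<Rightarrow> complex mat" where
  "star_spec_right c nA nB nE \<Phi> R = tensor_id_right nA (nA*nB) nE (star c nA nB \<Phi>) R"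

text \<open>Action on the second factor with a spectator A on the left:
  (id_A (x) (F star .))(R) for R on A (x) B, living on A (x) B (x) C.\<close>
definition star_spec_left ::
  "real \<Rightarrow> nat \<Rightarrow> nat \<Rightarrow> nat \<Rightarrow> (complex mat \<Rightarrow> complex mat) \<Rightarrow> complex mat \<Rightarrow> complex mat" where
  "star_spec_left c nA nB nC \<Phi> R = tensor_id_left nA nB (nB*nC) (star c nB nC \<Phi>) R"

text \<open>Quantum states over spacetime on C^nA (x) C^nE: density operators or F star sigma.\<close>
definition qstate_st :: "real \<Rightarrow> nat \<Rightarrow> nat \<Rightarrow> complex mat \<Rightarrow> bool" where
  "qstate_st c nA nE R \<longleftrightarrow> density (nA*nE) R \<or>
     (\<exists>F \<sigma>. channel nA nE F \<and> density nA \<sigma> \<and> R = star c nA nE F \<sigma>)"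

text \<open>Isometry V : C^d -> C^n (an n x d matrix with V^dagger V = 1), identifying a subspace
  system A_i of C^n with C^d.\<close>
definition isometry :: "nat \<Rightarrow> nat \<Rightarrow> complex mat \<Rightarrow> bool" where
  "isometry n d V \<longleftrightarrow> V \<in> carrier_mat n d \<and> adj V * V = 1\<^sub>m d"

definition state_over_time :: "real \<Rightarrow> bool" where
  "state_over_time c \<longleftrightarrow>
    (\<forall>n m \<Phi> \<rho>. 0 < n \<longrightarrow> 0 < m \<longrightarrow> channel n m \<Phi> \<longrightarrow> density n \<rho> \<longrightarrow>
        star c n m \<Phi> \<rho> \<in> carrier_mat (n*m) (n*m) \<and>
        ptrace_fst n m (star c n m \<Phi> \<rho>) = \<Phi> \<rho> \<and>
        ptrace_snd n m (star c n m \<Phi> \<rho>) = \<rho>)"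

definition axiom_H :: "real \<Rightarrow> bool" where
  "axiom_H c \<longleftrightarrow>
    (\<forall>n m \<Phi> \<rho>. 0 < n \<longrightarrow> 0 < m \<longrightarrow> channel n m \<Phi> \<longrightarrow> density n \<rho> \<longrightarrow>
        adj (star c n m \<Phi> \<rho>) = star c n m \<Phi> \<rho>)"

definition axiom_E :: "real \<Rightarrow> bool" where
  "axiom_E c \<longleftrightarrow>
    (\<forall>nA nB nE R \<Phi>. 0 < nA \<longrightarrow> 0 < nB \<longrightarrow> 0 < nE \<longrightarrow>
        qstate_st c nA nE R \<longrightarrow> channel nA nB \<Phi> \<longrightarrow>
        (\<forall>\<I>. cptni nE \<I> \<longrightarrow>
           tensor_id_left (nA*nB) nE nE \<I> (star_spec_right c nA nB nE \<Phi> R)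
             = star_spec_right c nA nB nE \<Phi> (tensor_id_left nA nE nE \<I> R)) \<and>
        ptrace_fst nA (nB*nE) (star_spec_right c nA nB nE \<Phi> R) = tensor_id_right nA nB nE \<Phi> R)"

definition axiom_P :: "real \<Rightarrow> bool" where
  "axiom_P c \<longleftrightarrow>
    (\<forall>nA nB nC \<E> \<F> \<rho>. 0 < nA \<longrightarrow> 0 < nB \<longrightarrow> 0 < nC \<longrightarrow>
        channel nA nB \<E> \<longrightarrow> channel nB nC \<F> \<longrightarrow> density nA \<rho> \<longrightarrow>
        ptrace_mid nA nB nC (star_spec_left c nA nB nC \<F> (star c nA nB \<E> \<rho>))
          = star c nA nC (\<F> \<circ> \<E>) \<rho>)"

text \<open>(CC): an orthogonal decomposition C^n = (+)_{i<r} A_i is given by isometries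
  V i : C^(d i) -> C^n with mutually orthogonal ranges spanning C^n; 1_{A_i} = V i (V i)^dagger.
  E_{B|A_i} = E o Ad_{1_{A_i}} viewed as channel from A_i is Y |-> E (V i Y (V i)^dagger),
  and operators on A_i (x) B are embedded into A (x) B by Ad_{V i (x) 1_B}.\<close>
definition axiom_CC :: "real \<Rightarrow> bool" where
  "axiom_CC c \<longleftrightarrow>
    (\<forall>n m r d V \<Phi> (p::nat \<Rightarrow> real). 0 < n \<longrightarrow> 0 < m \<longrightarrow>
        (\<forall>i<r. 0 < d i \<and> isometry n (d i) (V i)) \<longrightarrow>
        (\<forall>i<r. \<forall>j<r. i \<noteq> j \<longrightarrow> adj (V i) * V j = 0\<^sub>m (d i) (d j)) \<longrightarrow>
        mat_sum n n {..<r} (\<lambda>i. V i * adj (V i)) = 1\<^sub>m n \<longrightarrow>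
        channel n m \<Phi> \<longrightarrow>
        (\<forall>X \<in> carrier_mat n n.
           \<Phi> (mat_sum n n {..<r} (\<lambda>i. (V i * adj (V i)) * X * (V i * adj (V i)))) = \<Phi> X) \<longrightarrow>
        (\<forall>i<r. 0 \<le> p i) \<longrightarrow> (\<Sum>i<r. p i) = 1 \<longrightarrow>
        star c n m \<Phi> (mat_sum n n {..<r}
             (\<lambda>i. complex_of_real (p i / real (d i)) \<cdot>\<^sub>m (V i * adj (V i))))
        = mat_sum (n*m) (n*m) {..<r} (\<lambda>i. complex_of_real (p i) \<cdot>\<^sub>m
             (kron (V i) (1\<^sub>m m) *
              star c (d i) m (\<lambda>Y. \<Phi> (V i * Y * adj (V i))) ((1 / of_nat (d i)) \<cdot>\<^sub>m 1\<^sub>m (d i)) *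
              adj (kron (V i) (1\<^sub>m m)))))"

definition axiom_J :: "real \<Rightarrow> bool" where
  "axiom_J c \<longleftrightarrow>
    (\<forall>n m \<Phi>. 0 < n \<longrightarrow> 0 < m \<longrightarrow> channel n m \<Phi> \<longrightarrow>
        star c n m \<Phi> ((1 / of_nat n) \<cdot>\<^sub>m 1\<^sub>m n) = (1 / of_nat n) \<cdot>\<^sub>m jamiolkowski n m \<Phi>)"

definition axiom_QC :: "real \<Rightarrow> bool" where
  "axiom_QC c \<longleftrightarrow>
    (\<forall>n \<rho>. 0 < n \<longrightarrow> density n \<rho> \<longrightarrow>
       (\<exists>\<Theta>. lin_map n n \<Theta> \<and>
          (\<forall>m \<Phi>. 0 < m \<longrightarrow> channel n m \<Phi> \<longrightarrow>
             star c n m \<Phi> \<rho> =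
               tensor_id_right n n m \<Theta> (of_nat n \<cdot>\<^sub>m star c n m \<Phi> ((1 / of_nat n) \<cdot>\<^sub>m 1\<^sub>m n))) \<and>
          (\<forall>M \<in> carrier_mat n n. \<rho> * M = M * \<rho> \<longrightarrow> \<Theta> M = \<rho> * M)))"

end

theory Submission
  imports Defs
begin

lemma mult_entry:
  assumes "A \<in> carrier_mat n k" "B \<in> carrier_mat k l" "i < n" "j < l"
  shows "(A * B) $$ (i,j) = (\<Sum>t<k. A $$ (i,t) * B $$ (t,j))"
  using assms by (auto simp: scalar_prod_def lessThan_atLeast0 intro!: sum.cong)

definition unitm :: "nat \<Rightarrow> nat \<Rightarrow> nat \<Rightarrow> complex mat" where
  "unitm n a b = mat n n (\<lambda>(i,j). if i = a \<and> j = b then 1 else 0)"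

lemma unitm_carrier[simp]: "unitm n a b \<in> carrier_mat n n"
  by (simp add: unitm_def)

lemma mat_sum_carrier[simp]: "mat_sum n m I f \<in> carrier_mat n m"
  by (simp add: mat_sum_def)

lemma mat_sum_dim[simp]: "dim_row (mat_sum n m I f) = n" "dim_col (mat_sum n m I f) = m"
  by (simp_all add: mat_sum_def)

lemma mat_sum_entry[simp]: "i < n \<Longrightarrow> j < m \<Longrightarrow> mat_sum n m I f $$ (i,j) = (\<Sum>x\<in>I. f x $$ (i,j))"
  by (simp add: mat_sum_def)

lemma delta2:
  fixes f :: "nat \<Rightarrow> nat \<Rightarrow> 'a::comm_monoid_add"
  assumes "i < n" "j < m"
  shows "(\<Sum>a<n. \<Sum>a'<m. if i = a \<and> j = a' then f a a' else 0) = f i j"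
proof -
  have "(\<Sum>a<n. \<Sum>a'<m. if i = a \<and> j = a' then f a a' else 0) = (\<Sum>a<n. if i = a then f a j else 0)"
    using assms by (intro sum.cong refl) (auto simp: if_distrib cong: if_cong)
  also have "\<dots> = f i j" using assms by simp
  finally show ?thesis .
qed

lemma lin_map_zero:
  assumes "lin_map n m \<Phi>" shows "\<Phi> (0\<^sub>m n n) = 0\<^sub>m m m"
proof -
  have c: "\<Phi> (0\<^sub>m n n) \<in> carrier_mat m m" using assms by (simp add: lin_map_def)
  have "\<Phi> (0\<^sub>m n n) = \<Phi> (0 \<cdot>\<^sub>m 0\<^sub>m n n)" by (rule arg_cong[where f=\<Phi>]) (rule eq_matI, auto)
  also have "\<dots> = 0 \<cdot>\<^sub>m \<Phi> (0\<^sub>m n n)" using assms zero_carrier_mat unfolding lin_map_def by blast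
  also have "\<dots> = 0\<^sub>m m m" using c by (intro eq_matI) auto
  finally show ?thesis .
qed

lemma lin_map_sum:
  assumes "lin_map n m \<Phi>" "finite I" "\<forall>i\<in>I. f i \<in> carrier_mat n n"
  shows "\<Phi> (mat_sum n n I f) = mat_sum m m I (\<lambda>i. \<Phi> (f i))"
  using assms(2,3)
proof (induction I rule: finite_induct)
  case empty
  have "mat_sum n n {} f = 0\<^sub>m n n" by (intro eq_matI) auto
  moreover have "mat_sum m m {} (\<lambda>i. \<Phi> (f i)) = 0\<^sub>m m m" by (intro eq_matI) auto
  ultimately show ?case using lin_map_zero[OF assms(1)] by simp
next
  case (insert x F)
  have e1: "mat_sum n n (insert x F) f = f x + mat_sum n n F f"
    using insert by (intro eq_matI) auto
  have cx: "\<Phi> (f x) \<in> carrier_mat m m" using assms(1) insert by (simp add: lin_map_def)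
  have e2: "mat_sum m m (insert x F) (\<lambda>i. \<Phi> (f i)) = \<Phi> (f x) + mat_sum m m F (\<lambda>i. \<Phi> (f i))"
    using insert cx by (intro eq_matI) auto
  show ?case unfolding e1 e2 using assms(1) insert by (simp add: lin_map_def)
qed

lemma lin_expand:
  assumes "lin_map n m \<Phi>" "X \<in> carrier_mat n n" "b < m" "b' < m"
  shows "\<Phi> X $$ (b,b') = (\<Sum>a<n. \<Sum>a'<n. X $$ (a,a') * \<Phi> (unitm n a a') $$ (b,b'))"
proof -
  have X: "X = mat_sum n n ({..<n} \<times> {..<n}) (\<lambda>(a,a'). X $$ (a,a') \<cdot>\<^sub>m unitm n a a')"
  proof (rule eq_matI)
    fix i j assume ij: "i < dim_row (mat_sum n n ({..<n} \<times> {..<n}) (\<lambda>(a,a'). X $$ (a,a') \<cdot>\<^sub>m unitm n a a'))"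
       "j < dim_col (mat_sum n n ({..<n} \<times> {..<n}) (\<lambda>(a,a'). X $$ (a,a') \<cdot>\<^sub>m unitm n a a'))"
    hence ij': "i < n" "j < n" by auto
    have "(\<Sum>x\<in>{..<n} \<times> {..<n}. ((\<lambda>(a,a'). X $$ (a,a') \<cdot>\<^sub>m unitm n a a') x) $$ (i,j))
        = (\<Sum>a<n. \<Sum>a'<n. (X $$ (a,a') \<cdot>\<^sub>m unitm n a a') $$ (i,j))"
      by (simp add: sum.cartesian_product split_def)
    also have "\<dots> = (\<Sum>a<n. \<Sum>a'<n. X $$ (a,a') * (if i = a \<and> j = a' then 1 else 0))"
      using ij' by (intro sum.cong refl) (simp add: unitm_def)
    also have "\<dots> = X $$ (i,j)" using ij' by (simp add: if_distrib[of "\<lambda>x. _ * x"] delta2 cong: if_cong)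
    finally show "X $$ (i, j) = mat_sum n n ({..<n} \<times> {..<n}) (\<lambda>(a,a'). X $$ (a,a') \<cdot>\<^sub>m unitm n a a') $$ (i, j)"
      using ij' by simp
  qed (use assms in auto)
  have "\<Phi> X = mat_sum m m ({..<n} \<times> {..<n}) (\<lambda>i. \<Phi> ((\<lambda>(a,a'). X $$ (a,a') \<cdot>\<^sub>m unitm n a a') i))"
    by (subst X, rule lin_map_sum[OF assms(1)]) auto
  hence "\<Phi> X $$ (b,b') = (\<Sum>x\<in>{..<n} \<times> {..<n}. \<Phi> ((\<lambda>(a,a'). X $$ (a,a') \<cdot>\<^sub>m unitm n a a') x) $$ (b,b'))"
    using assms by simp
  also have "\<dots> = (\<Sum>a<n. \<Sum>a'<n. \<Phi> (X $$ (a,a') \<cdot>\<^sub>m unitm n a a') $$ (b,b'))"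
    by (simp add: sum.cartesian_product split_def)
  also have "\<dots> = (\<Sum>a<n. \<Sum>a'<n. X $$ (a,a') * \<Phi> (unitm n a a') $$ (b,b'))"
  proof (intro sum.cong refl)
    fix a a' 
    have "\<Phi> (X $$ (a,a') \<cdot>\<^sub>m unitm n a a') = X $$ (a,a') \<cdot>\<^sub>m \<Phi> (unitm n a a')"
      using assms(1) by (simp add: lin_map_def)
    moreover have "\<Phi> (unitm n a a') \<in> carrier_mat m m" using assms(1) by (simp add: lin_map_def)
    ultimately show "\<Phi> (X $$ (a,a') \<cdot>\<^sub>m unitm n a a') $$ (b,b') = X $$ (a,a') * \<Phi> (unitm n a a') $$ (b,b')"
      using assms by simp
  qed
  finally show ?thesis .
qed

lemma divmod_simps[simp]:
  assumes "b < (m::nat)" shows "(i*m + b) div m = i" "(i*m + b) mod m = b"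
  using assms by auto

lemma idx_lt: assumes "a < (n::nat)" "b < m" shows "a*m + b < n*m"
proof -
  have "a*m + b < a*m + m" using assms by simp
  also have "\<dots> = (a+1)*m" by simp
  also have "\<dots> \<le> n*m" using assms by (intro mult_right_mono) auto
  finally show ?thesis .
qed

lemma div_lt: "p < n*m \<Longrightarrow> p div m < (n::nat)"
  by (simp add: less_mult_imp_div_less)
lemma mod_lt: "p < n*m \<Longrightarrow> p mod m < (m::nat)"
  by (metis mod_less_divisor mult_0_right not_gr0 not_less_zero)

definition kk :: "(complex mat \<Rightarrow> complex mat) \<Rightarrow> nat \<Rightarrow> nat \<Rightarrow> nat \<Rightarrow> nat \<Rightarrow> nat \<Rightarrow> complex" where
  "kk \<Phi> n a a' b b' = \<Phi> (unitm n a' a) $$ (b,b')"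

lemma jam_entry:
  assumes "a < n" "a' < n" "b < m" "b' < m"
  shows "jamiolkowski n m \<Phi> $$ (a*m+b, a'*m+b') = kk \<Phi> n a a' b b'"
proof -
  have "mat n n (\<lambda>(i,i'). swap_op n $$ (a*n+i, a'*n+i')) = unitm n a' a"
    using assms by (intro eq_matI) (auto simp: swap_op_def unitm_def idx_lt)
  thus ?thesis using assms unfolding jamiolkowski_def tensor_id_left_def kk_def
    by (simp add: idx_lt)
qed

lemma jam_dim[simp]: "dim_row (jamiolkowski n m \<Phi>) = n*m" "dim_col (jamiolkowski n m \<Phi>) = n*m"
  by (simp_all add: jamiolkowski_def tensor_id_left_def)

lemma jam_carrier[simp]: "jamiolkowski n m \<Phi> \<in> carrier_mat (n*m) (n*m)"
  by (simp add: jamiolkowski_def tensor_id_left_def)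

abbreviation "alpha c \<equiv> (1/2 + \<i> * complex_of_real c)"
abbreviation "beta c \<equiv> (1/2 - \<i> * complex_of_real c)"

lemma Theta_carrier[simp]: "\<rho> \<in> carrier_mat n n \<Longrightarrow> M \<in> carrier_mat n n \<Longrightarrow> Theta c \<rho> M \<in> carrier_mat n n"
  by (auto simp: Theta_def anticommutator_def commutator_def intro!: add_carrier_mat smult_carrier_mat minus_carrier_mat mult_carrier_mat)

lemma Theta_dim[simp]: "dim_row (Theta c \<rho> M) = dim_row M" "dim_col (Theta c \<rho> M) = dim_col \<rho>"
  by (simp_all add: Theta_def anticommutator_def commutator_def)

lemma Theta_entry:
  assumes "\<rho> \<in> carrier_mat n n" "M \<in> carrier_mat n n" "i < n" "k < n"
  shows "Theta c \<rho> M $$ (i,k) = alpha c * (\<Sum>j<n. \<rho> $$ (i,j) * M $$ (j,k)) + beta c * (\<Sum>j<n. M $$ (i,j) * \<rho> $$ (j,k))"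
proof -
  have e1: "(\<rho> * M) $$ (i,k) = (\<Sum>j<n. \<rho> $$ (i,j) * M $$ (j,k))" using mult_entry[OF assms(1,2,3,4)] .
  have e2: "(M * \<rho>) $$ (i,k) = (\<Sum>j<n. M $$ (i,j) * \<rho> $$ (j,k))" using mult_entry[OF assms(2,1,3,4)] .
  have d: "dim_row (\<rho> * M) = n" "dim_col (\<rho> * M) = n" "dim_row (M * \<rho>) = n" "dim_col (M * \<rho>) = n"
    using assms by auto
  show ?thesis unfolding Theta_def anticommutator_def commutator_def using assms
    by (simp add: d e1 e2 algebra_simps)
qed

lemma star_carrier[simp]: "star c n m \<Phi> \<rho> \<in> carrier_mat (n*m) (n*m)"
  by (simp add: star_def tensor_id_right_def)

lemma star_dim[simp]: "dim_row (star c n m \<Phi> \<rho>) = n*m" "dim_col (star c n m \<Phi> \<rho>) = n*m"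
  by (simp_all add: star_def tensor_id_right_def)

lemma star_entry:
  assumes "\<rho> \<in> carrier_mat n n" "p < n*m" "q < n*m"
  shows "star c n m \<Phi> \<rho> $$ (p,q) =
     alpha c * (\<Sum>j<n. \<rho> $$ (p div m, j) * kk \<Phi> n j (q div m) (p mod m) (q mod m))
   + beta c * (\<Sum>j<n. kk \<Phi> n (p div m) j (p mod m) (q mod m) * \<rho> $$ (j, q div m))"
proof -
  let ?M = "mat n n (\<lambda>(i,i'). jamiolkowski n m \<Phi> $$ (i*m + p mod m, i'*m + q mod m))"
  have M: "?M = mat n n (\<lambda>(i,i'). kk \<Phi> n i i' (p mod m) (q mod m))"
    using assms by (intro eq_matI) (auto simp: jam_entry mod_lt)
  have "star c n m \<Phi> \<rho> $$ (p,q) = Theta c \<rho> ?M $$ (p div m, q div m)"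
    using assms unfolding star_def tensor_id_right_def by simp
  also have "\<dots> = alpha c * (\<Sum>j<n. \<rho> $$ (p div m, j) * kk \<Phi> n j (q div m) (p mod m) (q mod m))
   + beta c * (\<Sum>j<n. kk \<Phi> n (p div m) j (p mod m) (q mod m) * \<rho> $$ (j, q div m))" unfolding M using assms
    by (subst Theta_entry[of _ n]) (auto simp: div_lt intro!: sum.cong)
  finally show ?thesis .
qed

lemma lin_carrier: "lin_map n m \<Phi> \<Longrightarrow> X \<in> carrier_mat n n \<Longrightarrow> \<Phi> X \<in> carrier_mat m m"
  by (simp add: lin_map_def)

lemma channel_lin: "channel n m \<Phi> \<Longrightarrow> lin_map n m \<Phi>"
  by (simp add: channel_def cp_map_def)

lemma alpha_beta: "alpha c + beta c = 1" by simp

lemma ptrace_fst_star: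
  assumes "lin_map n m \<Phi>" "X \<in> carrier_mat n n"
  shows "ptrace_fst n m (star c n m \<Phi> X) = \<Phi> X"
proof (rule eq_matI)
  show "dim_row (ptrace_fst n m (star c n m \<Phi> X)) = dim_row (\<Phi> X)"
       "dim_col (ptrace_fst n m (star c n m \<Phi> X)) = dim_col (\<Phi> X)"
    using lin_carrier[OF assms] by (auto simp: ptrace_fst_def)
  fix b b' assume "b < dim_row (\<Phi> X)" "b' < dim_col (\<Phi> X)"
  hence bb: "b < m" "b' < m" using lin_carrier[OF assms] by auto
  have "ptrace_fst n m (star c n m \<Phi> X) $$ (b,b') = (\<Sum>i<n. star c n m \<Phi> X $$ (i*m+b, i*m+b'))"
    using bb by (simp add: ptrace_fst_def)
  also have "\<dots> = (\<Sum>i<n. alpha c * (\<Sum>j<n. X $$ (i, j) * kk \<Phi> n j i b b')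
      + beta c * (\<Sum>j<n. kk \<Phi> n i j b b' * X $$ (j, i)))"
    using bb assms by (intro sum.cong refl, subst star_entry) (auto simp: idx_lt)
  also have "\<dots> = alpha c * (\<Sum>i<n. \<Sum>j<n. X $$ (i, j) * kk \<Phi> n j i b b')
      + beta c * (\<Sum>i<n. \<Sum>j<n. kk \<Phi> n i j b b' * X $$ (j, i))"
    by (simp add: sum.distrib sum_distrib_left)
  also have "(\<Sum>i<n. \<Sum>j<n. kk \<Phi> n i j b b' * X $$ (j, i)) = (\<Sum>i<n. \<Sum>j<n. X $$ (i, j) * kk \<Phi> n j i b b')"
    by (subst sum.swap) (simp add: mult.commute)
  also have "alpha c * (\<Sum>i<n. \<Sum>j<n. X $$ (i, j) * kk \<Phi> n j i b b') + beta c * (\<Sum>i<n. \<Sum>j<n. X $$ (i, j) * kk \<Phi> n j i b b')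
     = (\<Sum>i<n. \<Sum>j<n. X $$ (i, j) * kk \<Phi> n j i b b')"
    by (simp add: distrib_right[symmetric])
  also have "\<dots> = \<Phi> X $$ (b,b')"
    using lin_expand[OF assms bb] by (simp add: kk_def)
  finally show "ptrace_fst n m (star c n m \<Phi> X) $$ (b,b') = \<Phi> X $$ (b,b')" .
qed

lemma trace_kk:
  assumes "channel n m \<Phi>" "j < n" "k < n"
  shows "(\<Sum>b<m. kk \<Phi> n j k b b) = (if j = k then 1 else 0)"
proof -
  have c: "\<Phi> (unitm n k j) \<in> carrier_mat m m" using lin_carrier[OF channel_lin[OF assms(1)]] by simp
  have "(\<Sum>b<m. kk \<Phi> n j k b b) = ctrace (\<Phi> (unitm n k j))"
    using c by (simp add: kk_def ctrace_def)
  also have "\<dots> = ctrace (unitm n k j)" using assms(1) by (simp add: channel_def)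
  also have "\<dots> = (if j = k then 1 else 0)" using assms by (cases "j = k") (auto simp: ctrace_def unitm_def intro: sum.neutral)
  finally show ?thesis .
qed

lemma ptrace_snd_star:
  assumes "channel n m \<Phi>" "\<rho> \<in> carrier_mat n n"
  shows "ptrace_snd n m (star c n m \<Phi> \<rho>) = \<rho>"
proof (rule eq_matI)
  show "dim_row (ptrace_snd n m (star c n m \<Phi> \<rho>)) = dim_row \<rho>"
       "dim_col (ptrace_snd n m (star c n m \<Phi> \<rho>)) = dim_col \<rho>"
    using assms by (auto simp: ptrace_snd_def)
  fix i k assume "i < dim_row \<rho>" "k < dim_col \<rho>"
  hence ik: "i < n" "k < n" using assms by auto
  have "ptrace_snd n m (star c n m \<Phi> \<rho>) $$ (i,k) = (\<Sum>b<m. star c n m \<Phi> \<rho> $$ (i*m+b, k*m+b))"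
    using ik by (simp add: ptrace_snd_def)
  also have "\<dots> = (\<Sum>b<m. alpha c * (\<Sum>j<n. \<rho> $$ (i, j) * kk \<Phi> n j k b b)
      + beta c * (\<Sum>j<n. kk \<Phi> n i j b b * \<rho> $$ (j, k)))"
    using ik assms by (intro sum.cong refl, subst star_entry) (auto simp: idx_lt)
  also have "\<dots> = alpha c * (\<Sum>j<n. \<rho> $$ (i, j) * (\<Sum>b<m. kk \<Phi> n j k b b))
      + beta c * (\<Sum>j<n. (\<Sum>b<m. kk \<Phi> n i j b b) * \<rho> $$ (j, k))"
    by (simp add: sum.distrib sum_distrib_left sum_distrib_right sum.swap[of _ "{..<m}"])
  also have "\<dots> = alpha c * (\<Sum>j<n. \<rho> $$ (i, j) * (if j = k then 1 else 0))
      + beta c * (\<Sum>j<n. (if i = j then 1 else 0) * \<rho> $$ (j, k))"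
    using ik by (simp add: trace_kk[OF assms(1)])
  also have "\<dots> = alpha c * \<rho> $$ (i,k) + beta c * \<rho> $$ (i,k)"
    using ik by (simp add: if_distrib[of "\<lambda>x. _ * x"] if_distrib[of "\<lambda>x. x * _"] cong: if_cong)
  also have "\<dots> = \<rho> $$ (i,k)" by (simp add: distrib_right[symmetric])
  finally show "ptrace_snd n m (star c n m \<Phi> \<rho>) $$ (i,k) = \<rho> $$ (i,k)" .
qed

lemma herm_alg:
  fixes A B C D A' B' C' D' :: complex
  assumes h: "\<And>y. A' + cnj y * B' + y * C' + cnj y * y * D' = cnj (A + cnj y * B + y * C + cnj y * y * D)"
  shows "B' = cnj C"
proof -
  have h1: "A' + B' + C' + D' = cnj A + cnj B + cnj C + cnj D" using h[of 1] by simp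
  have hm: "A' - B' - C' + D' = cnj A - cnj B - cnj C + cnj D" using h[of "-1"] by simp
  have hi: "A' - \<i> * B' + \<i> * C' + D' = cnj A + \<i> * cnj B - \<i> * cnj C + cnj D" using h[of "\<i>"] by simp
  have hmi: "A' + \<i> * B' - \<i> * C' + D' = cnj A - \<i> * cnj B + \<i> * cnj C + cnj D" using h[of "-\<i>"] by simp
  have ii: "\<i> * \<i> = -1" by simp
  have a: "(A' + B' + C' + D') - (A' - B' - C' + D') = (cnj A + cnj B + cnj C + cnj D) - (cnj A - cnj B - cnj C + cnj D)"
    by (simp only: h1 hm)
  hence "2 * (B' + C') = 2 * (cnj B + cnj C)" by (simp add: algebra_simps)
  hence a': "B' + C' = cnj B + cnj C" by (metis mult_left_cancel zero_neq_numeral)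
  have b: "(A' + \<i> * B' - \<i> * C' + D') - (A' - \<i> * B' + \<i> * C' + D') = (cnj A - \<i> * cnj B + \<i> * cnj C + cnj D) - (cnj A + \<i> * cnj B - \<i> * cnj C + cnj D)"
    by (simp only: hi hmi)
  hence "2 * \<i> * (B' - C') = 2 * \<i> * (cnj C - cnj B)" by (simp add: algebra_simps)
  hence b': "B' - C' = cnj C - cnj B" by simp
  from a' b' have "(B' + C') + (B' - C') = (cnj B + cnj C) + (cnj C - cnj B)" by simp
  thus ?thesis by simp
qed

definition vv :: "nat \<Rightarrow> nat \<Rightarrow> complex \<Rightarrow> nat \<Rightarrow> complex" where
  "vv i j y k = (if k = i then 1 else 0) + (if k = j then y else 0)"

lemma sum_vv1:
  fixes g :: "nat \<Rightarrow> complex"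
  assumes "i < n" "j < n"
  shows "(\<Sum>k<n. vv i j y k * g k) = g i + y * g j"
  using assms by (simp add: vv_def distrib_right sum.distrib if_distrib[of "\<lambda>x. x * _"] cong: if_cong)

lemma sum_vv2:
  fixes g :: "nat \<Rightarrow> complex"
  assumes "i < n" "j < n"
  shows "(\<Sum>k<n. cnj (vv i j y k) * g k) = g i + cnj y * g j"
proof -
  have "cnj (vv i j y k) = vv i j (cnj y) k" for k by (simp add: vv_def)
  thus ?thesis using sum_vv1[OF assms] by simp
qed

lemma quad_vv:
  fixes Z :: "nat \<Rightarrow> nat \<Rightarrow> complex"
  assumes "i < n" "j < n"
  shows "(\<Sum>k<n. \<Sum>l<n. cnj (vv i j y k) * Z k l * vv i j y l) = Z i i + y * Z i j + cnj y * Z j i + cnj y * y * Z j j"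
proof -
  have "(\<Sum>k<n. \<Sum>l<n. cnj (vv i j y k) * Z k l * vv i j y l) = (\<Sum>k<n. cnj (vv i j y k) * (\<Sum>l<n. vv i j y l * Z k l))"
    by (simp add: sum_distrib_left mult.commute mult.left_commute)
  also have "\<dots> = (\<Sum>k<n. cnj (vv i j y k) * (Z k i + y * Z k j))"
    using sum_vv1[OF assms] by simp
  also have "\<dots> = (Z i i + y * Z i j) + cnj y * (Z j i + y * Z j j)"
    using sum_vv2[OF assms] by simp
  finally show ?thesis by (simp add: algebra_simps)
qed

lemma psd_herm:
  assumes "psd n X" "i < n" "j < n"
  shows "X $$ (j,i) = cnj (X $$ (i,j))"
proof (rule herm_alg[where A' = "X $$ (i,i)" and A = "X $$ (i,i)" and C' = "X $$ (i,j)" and D = "X $$ (j,j)" and D' = "X $$ (j,j)"])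
  fix y
  have "Im (\<Sum>k<n. \<Sum>l<n. cnj (vv i j y k) * X $$ (k,l) * vv i j y l) = 0"
    using assms(1) unfolding psd_def by blast
  hence "Im (X $$ (i,i) + y * X $$ (i,j) + cnj y * X $$ (j,i) + cnj y * y * X $$ (j,j)) = 0"
    using quad_vv[OF assms(2,3), where Z="\<lambda>k l. X $$ (k,l)"] by simp
  hence "X $$ (i,i) + y * X $$ (i,j) + cnj y * X $$ (j,i) + cnj y * y * X $$ (j,j)
    = cnj (X $$ (i,i) + y * X $$ (i,j) + cnj y * X $$ (j,i) + cnj y * y * X $$ (j,j))"
    by (simp add: complex_eq_iff)
  thus "X $$ (i,i) + cnj y * X $$ (j,i) + y * X $$ (i,j) + cnj y * y * X $$ (j,j)
    = cnj (X $$ (i,i) + cnj y * X $$ (j,i) + y * X $$ (i,j) + cnj y * y * X $$ (j,j))"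
    by (simp add: algebra_simps)
qed

definition Pm :: "nat \<Rightarrow> (nat \<Rightarrow> complex) \<Rightarrow> complex mat" where
  "Pm n w = mat n n (\<lambda>(a,a'). cnj (w a) * w a')"

lemma Pm_psd: "psd n (Pm n w)"
proof -
  have h: "(\<Sum>k<n. \<Sum>l<n. cnj (v k) * Pm n w $$ (k,l) * v l) = cnj (\<Sum>k<n. w k * v k) * (\<Sum>l<n. w l * v l)" for v
    by (simp add: Pm_def sum_distrib_left sum_distrib_right mult.commute mult.left_commute)
  have z1: "Im (cnj z * z) = 0" and z2: "0 \<le> Re (cnj z * z)" for z :: complex
    by (simp_all add: algebra_simps)
  show ?thesis unfolding psd_def
  proof (intro conjI allI)
    show "Pm n w \<in> carrier_mat n n" by (simp add: Pm_def)
    fix v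
    show "Im (\<Sum>k<n. \<Sum>l<n. cnj (v k) * Pm n w $$ (k,l) * v l) = 0" unfolding h by (rule z1)
    show "0 \<le> Re (\<Sum>k<n. \<Sum>l<n. cnj (v k) * Pm n w $$ (k,l) * v l)" unfolding h by (rule z2)
  qed
qed

lemma cp_pos:
  assumes "cp_map n m \<Phi>" "psd n X"
  shows "psd m (\<Phi> X)"
proof -
  have X: "X \<in> carrier_mat n n" using assms(2) by (simp add: psd_def)
  have "\<forall>k R. psd (n*k) R \<longrightarrow> psd (m*k) (tensor_id_right n m k \<Phi> R)" using assms(1) unfolding cp_map_def by blast
  hence "psd (n*1) X \<longrightarrow> psd (m*1) (tensor_id_right n m 1 \<Phi> X)" by blast
  hence "psd m (tensor_id_right n m 1 \<Phi> X)" using assms(2) by simp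
  moreover have "mat n n (\<lambda>(i,i'). X $$ (i*1 + p mod 1, i'*1 + q mod 1)) = X" for p q
    using X by (intro eq_matI) auto
  moreover have "\<Phi> X \<in> carrier_mat m m" using assms X by (simp add: cp_map_def lin_map_def)
  ultimately have "psd m (mat m m (\<lambda>(p,q). \<Phi> X $$ (p,q)))" by (simp add: tensor_id_right_def del: One_nat_def)
  moreover have "mat m m (\<lambda>(p,q). \<Phi> X $$ (p,q)) = \<Phi> X"
    using \<open>\<Phi> X \<in> carrier_mat m m\<close> by (intro eq_matI) auto
  ultimately show ?thesis by simp
qed

lemma kk_herm:
  assumes "channel n m \<Phi>" "a < n" "a' < n" "b < m" "b' < m"
  shows "cnj (kk \<Phi> n a a' b b') = kk \<Phi> n a' a b' b"
proof -
  have cp: "cp_map n m \<Phi>" and lin: "lin_map n m \<Phi>" using assms(1) by (auto simp: channel_def cp_map_def)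
  let ?G = "\<lambda>u u' b b'. \<Phi> (unitm n u u') $$ (b,b')"
  have "?G a a' b' b = cnj (?G a' a b b')"
  proof (rule herm_alg[where A' = "?G a' a' b' b" and A = "?G a' a' b b'" and C' = "?G a' a b' b"
        and D = "?G a a b b'" and D' = "?G a a b' b" and B = "?G a a' b b'"])
    fix y
    have ex: "\<Phi> (Pm n (vv a' a y)) $$ (x,x') = ?G a' a' x x' + y * ?G a' a x x' + cnj y * ?G a a' x x' + cnj y * y * ?G a a x x'"
      if "x < m" "x' < m" for x x'
    proof -
      have "\<Phi> (Pm n (vv a' a y)) $$ (x,x') = (\<Sum>k<n. \<Sum>l<n. cnj (vv a' a y k) * ?G k l x x' * vv a' a y l)"
        using lin_expand[OF lin, of "Pm n (vv a' a y)" x x'] that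
        by (simp add: Pm_def mult.commute mult.left_commute)
      thus ?thesis using quad_vv[OF assms(3,2), where Z="\<lambda>k l. ?G k l x x'"] by simp
    qed
    have ps: "psd m (\<Phi> (Pm n (vv a' a y)))" by (rule cp_pos[OF cp Pm_psd])
    have "\<Phi> (Pm n (vv a' a y)) $$ (b',b) = cnj (\<Phi> (Pm n (vv a' a y)) $$ (b,b'))"
      by (rule psd_herm[OF ps assms(4,5)])
    thus "?G a' a' b' b + cnj y * ?G a a' b' b + y * ?G a' a b' b + cnj y * y * ?G a a b' b =
          cnj (?G a' a' b b' + cnj y * ?G a a' b b' + y * ?G a' a b b' + cnj y * y * ?G a a b b')"
      unfolding ex[OF assms(5,4)] ex[OF assms(4,5)] by (simp add: algebra_simps)
  qed
  thus ?thesis by (simp add: kk_def)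
qed

lemma density_carrier: "density n \<rho> \<Longrightarrow> \<rho> \<in> carrier_mat n n"
  by (simp add: density_def psd_def)

lemma star_herm:
  assumes ch: "channel n m \<Phi>" and d: "density n \<rho>"
  shows "adj (star c n m \<Phi> \<rho>) = star c n m \<Phi> \<rho>"
proof (rule eq_matI)
  have rc: "\<rho> \<in> carrier_mat n n" using density_carrier[OF d] .
  have ps: "psd n \<rho>" using d by (simp add: density_def)
  show "dim_row (adj (star c n m \<Phi> \<rho>)) = dim_row (star c n m \<Phi> \<rho>)"
       "dim_col (adj (star c n m \<Phi> \<rho>)) = dim_col (star c n m \<Phi> \<rho>)"
    by (auto simp: adj_def)
  fix p q assume "p < dim_row (star c n m \<Phi> \<rho>)" "q < dim_col (star c n m \<Phi> \<rho>)"
  hence pq: "p < n*m" "q < n*m" by auto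
  note bnd = div_lt[OF pq(1)] div_lt[OF pq(2)] mod_lt[OF pq(1)] mod_lt[OF pq(2)]
  have "adj (star c n m \<Phi> \<rho>) $$ (p,q) = cnj (star c n m \<Phi> \<rho> $$ (q,p))"
    using pq by (simp add: adj_def)
  also have "\<dots> = cnj (alpha c * (\<Sum>j<n. \<rho> $$ (q div m, j) * kk \<Phi> n j (p div m) (q mod m) (p mod m))
   + beta c * (\<Sum>j<n. kk \<Phi> n (q div m) j (q mod m) (p mod m) * \<rho> $$ (j, p div m)))"
    by (subst star_entry[OF rc pq(2,1)]) simp
  also have "\<dots> = beta c * (\<Sum>j<n. cnj (\<rho> $$ (q div m, j)) * cnj (kk \<Phi> n j (p div m) (q mod m) (p mod m)))
   + alpha c * (\<Sum>j<n. cnj (kk \<Phi> n (q div m) j (q mod m) (p mod m)) * cnj (\<rho> $$ (j, p div m)))"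
    by (simp add: cnj_sum)
  also have "\<dots> = beta c * (\<Sum>j<n. \<rho> $$ (j, q div m) * kk \<Phi> n (p div m) j (p mod m) (q mod m))
   + alpha c * (\<Sum>j<n. kk \<Phi> n j (q div m) (p mod m) (q mod m) * \<rho> $$ (p div m, j))"
    using bnd by (intro arg_cong2[where f="(+)"] arg_cong2[where f="(*)"] refl sum.cong)
      (simp_all add: psd_herm[OF ps, symmetric] kk_herm[OF ch])
  also have "\<dots> = star c n m \<Phi> \<rho> $$ (p,q)"
    by (subst star_entry[OF rc pq]) (simp add: mult.commute)
  finally show "adj (star c n m \<Phi> \<rho>) $$ (p,q) = star c n m \<Phi> \<rho> $$ (p,q)" .
qed

lemma star_J:
  assumes "0 < n"
  shows "star c n m \<Phi> ((1 / of_nat n) \<cdot>\<^sub>m 1\<^sub>m n) = (1 / of_nat n) \<cdot>\<^sub>m jamiolkowski n m \<Phi>"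
proof (rule eq_matI)
  show "dim_row (star c n m \<Phi> ((1 / of_nat n) \<cdot>\<^sub>m 1\<^sub>m n)) = dim_row ((1 / of_nat n) \<cdot>\<^sub>m jamiolkowski n m \<Phi>)"
       "dim_col (star c n m \<Phi> ((1 / of_nat n) \<cdot>\<^sub>m 1\<^sub>m n)) = dim_col ((1 / of_nat n) \<cdot>\<^sub>m jamiolkowski n m \<Phi>)"
    using jam_carrier[of n m \<Phi>] by auto
  fix p q assume "p < dim_row ((1 / of_nat n) \<cdot>\<^sub>m jamiolkowski n m \<Phi>)" "q < dim_col ((1 / of_nat n) \<cdot>\<^sub>m jamiolkowski n m \<Phi>)"
  hence pq: "p < n*m" "q < n*m" using jam_carrier[of n m \<Phi>] by auto
  note bnd = div_lt[OF pq(1)] div_lt[OF pq(2)] mod_lt[OF pq(1)] mod_lt[OF pq(2)]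
  have rc: "(1 / of_nat n) \<cdot>\<^sub>m 1\<^sub>m n \<in> carrier_mat n n" by simp
  have "star c n m \<Phi> ((1 / of_nat n) \<cdot>\<^sub>m 1\<^sub>m n) $$ (p,q) =
     alpha c * (\<Sum>j<n. (if p div m = j then 1 / of_nat n else 0) * kk \<Phi> n j (q div m) (p mod m) (q mod m))
   + beta c * (\<Sum>j<n. kk \<Phi> n (p div m) j (p mod m) (q mod m) * (if j = q div m then 1 / of_nat n else 0))"
    using bnd by (subst star_entry[OF rc pq]) (auto intro!: arg_cong2[where f="(+)"] arg_cong2[where f="(*)"] sum.cong)
  also have "\<dots> = alpha c * ((1 / of_nat n) * kk \<Phi> n (p div m) (q div m) (p mod m) (q mod m)) + beta c * ((1 / of_nat n) * kk \<Phi> n (p div m) (q div m) (p mod m) (q mod m))"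
    using bnd by (simp add: if_distrib[of "\<lambda>x. x * _"] if_distrib[of "\<lambda>x. _ * x"] mult.commute cong: if_cong)
  also have "\<dots> = (1 / of_nat n) * kk \<Phi> n (p div m) (q div m) (p mod m) (q mod m)"
    by (simp only: distrib_right[symmetric] alpha_beta mult_1)
  also have "\<dots> = (1 / of_nat n) * jamiolkowski n m \<Phi> $$ (p div m * m + p mod m, q div m * m + q mod m)"
    using bnd jam_entry[of "p div m" n "q div m" "p mod m" m "q mod m" \<Phi>] by simp
  also have "\<dots> = ((1 / of_nat n) \<cdot>\<^sub>m jamiolkowski n m \<Phi>) $$ (p,q)"
    using pq by simp
  finally show "star c n m \<Phi> ((1 / of_nat n) \<cdot>\<^sub>m 1\<^sub>m n) $$ (p,q) = ((1 / of_nat n) \<cdot>\<^sub>m jamiolkowski n m \<Phi>) $$ (p,q)" .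
qed

lemma Theta_lin:
  assumes "\<rho> \<in> carrier_mat n n"
  shows "lin_map n n (Theta c \<rho>)"
  unfolding lin_map_def
proof (intro conjI ballI allI)
  fix X :: "complex mat" assume X: "X \<in> carrier_mat n n"
  show "Theta c \<rho> X \<in> carrier_mat n n" using assms X by simp
  fix a
  show "Theta c \<rho> (a \<cdot>\<^sub>m X) = a \<cdot>\<^sub>m Theta c \<rho> X"
  proof (rule eq_matI)
    fix i k assume "i < dim_row (a \<cdot>\<^sub>m Theta c \<rho> X)" "k < dim_col (a \<cdot>\<^sub>m Theta c \<rho> X)"
    hence ik: "i < n" "k < n" using assms X by auto
    show "Theta c \<rho> (a \<cdot>\<^sub>m X) $$ (i,k) = (a \<cdot>\<^sub>m Theta c \<rho> X) $$ (i,k)"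
      using ik assms X
      by (simp add: Theta_entry[of _ n] sum_distrib_left algebra_simps)
  qed (use assms X in auto)
next
  fix X Y :: "complex mat" assume X: "X \<in> carrier_mat n n" and Y: "Y \<in> carrier_mat n n"
  show "Theta c \<rho> (X + Y) = Theta c \<rho> X + Theta c \<rho> Y"
  proof (rule eq_matI)
    fix i k assume "i < dim_row (Theta c \<rho> X + Theta c \<rho> Y)" "k < dim_col (Theta c \<rho> X + Theta c \<rho> Y)"
    hence ik: "i < n" "k < n" using assms Y by auto
    show "Theta c \<rho> (X + Y) $$ (i,k) = (Theta c \<rho> X + Theta c \<rho> Y) $$ (i,k)"
      using ik assms X Y
      by (simp add: Theta_entry[of _ n] sum.distrib algebra_simps)
  qed (use assms X Y in auto)
qed

lemma Theta_comm:
  assumes "\<rho> \<in> carrier_mat n n" "M \<in> carrier_mat n n" "\<rho> * M = M * \<rho>"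
  shows "Theta c \<rho> M = \<rho> * M"
proof -
  have "Theta c \<rho> M = (1/2 :: complex) \<cdot>\<^sub>m (\<rho> * M + \<rho> * M) + (\<i> * complex_of_real c) \<cdot>\<^sub>m (\<rho> * M - \<rho> * M)"
    unfolding Theta_def anticommutator_def commutator_def assms(3) ..
  also have "\<dots> = \<rho> * M"
    using assms by (intro eq_matI) auto
  finally show ?thesis .
qed

lemma sum_swap3: "(\<Sum>a\<in>A. \<Sum>b\<in>B. \<Sum>c\<in>C. f a b c) = (\<Sum>b\<in>B. \<Sum>c\<in>C. \<Sum>a\<in>A. f a b c)"
proof -
  have "(\<Sum>a\<in>A. \<Sum>b\<in>B. \<Sum>c\<in>C. f a b c) = (\<Sum>b\<in>B. \<Sum>a\<in>A. \<Sum>c\<in>C. f a b c)"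
    by (rule sum.swap)
  also have "\<dots> = (\<Sum>b\<in>B. \<Sum>c\<in>C. \<Sum>a\<in>A. f a b c)"
    by (rule sum.cong[OF refl], rule sum.swap)
  finally show ?thesis .
qed

lemma sum4_swap: "(\<Sum>i\<in>A. \<Sum>i'\<in>B. \<Sum>j\<in>C. \<Sum>j'\<in>D. F i i' j j') = (\<Sum>j\<in>C. \<Sum>j'\<in>D. \<Sum>i\<in>A. \<Sum>i'\<in>B. F i i' j j')"
proof -
  have "(\<Sum>i\<in>A. \<Sum>i'\<in>B. \<Sum>j\<in>C. \<Sum>j'\<in>D. F i i' j j') = (\<Sum>i\<in>A. \<Sum>j\<in>C. \<Sum>j'\<in>D. \<Sum>i'\<in>B. F i i' j j')"
    by (rule sum.cong[OF refl], rule sum_swap3)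
  also have "\<dots> = (\<Sum>j\<in>C. \<Sum>j'\<in>D. \<Sum>i\<in>A. \<Sum>i'\<in>B. F i i' j j')"
    by (rule sum_swap3)
  finally show ?thesis .
qed

lemma comm_tensor:
  assumes S: "lin_map n N S" and I: "lin_map k K I"
  shows "tensor_id_left N k K I (tensor_id_right n N k S R) = tensor_id_right n N K S (tensor_id_left n k K I R)"
proof (rule eq_matI)
  show "dim_row (tensor_id_left N k K I (tensor_id_right n N k S R)) = dim_row (tensor_id_right n N K S (tensor_id_left n k K I R))"
       "dim_col (tensor_id_left N k K I (tensor_id_right n N k S R)) = dim_col (tensor_id_right n N K S (tensor_id_left n k K I R))"
    by (simp_all add: tensor_id_left_def tensor_id_right_def)
  fix P Q assume "P < dim_row (tensor_id_right n N K S (tensor_id_left n k K I R))"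
    "Q < dim_col (tensor_id_right n N K S (tensor_id_left n k K I R))"
  hence PQ: "P < N*K" "Q < N*K" by (simp_all add: tensor_id_right_def)
  define Pd Qd Pm Qm where "Pd = P div K" "Qd = Q div K" "Pm = P mod K" "Qm = Q mod K"
  have b: "Pd < N" "Qd < N" "Pm < K" "Qm < K" using PQ by (simp_all add: Pd_Qd_Pm_Qm_def div_lt mod_lt)
  define Z where "Z i i' = mat n n (\<lambda>(j,j'). R $$ (j*k+i, j'*k+i'))" for i i'
  have Zc: "Z i i' \<in> carrier_mat n n" for i i' by (simp add: Z_def)
  have Y: "mat k k (\<lambda>(i,i'). tensor_id_right n N k S R $$ (Pd*k+i, Qd*k+i')) = mat k k (\<lambda>(i,i'). S (Z i i') $$ (Pd,Qd))"
    using b by (intro eq_matI) (auto simp: tensor_id_right_def idx_lt Z_def)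
  have "tensor_id_left N k K I (tensor_id_right n N k S R) $$ (P,Q)
      = I (mat k k (\<lambda>(i,i'). S (Z i i') $$ (Pd,Qd))) $$ (Pm,Qm)"
    using PQ Y by (simp add: tensor_id_left_def Pd_Qd_Pm_Qm_def)
  also have "\<dots> = (\<Sum>i<k. \<Sum>i'<k. S (Z i i') $$ (Pd,Qd) * I (unitm k i i') $$ (Pm,Qm))"
    using b by (subst lin_expand[OF I]) auto
  also have "\<dots> = (\<Sum>i<k. \<Sum>i'<k. (\<Sum>j<n. \<Sum>j'<n. R $$ (j*k+i, j'*k+i') * S (unitm n j j') $$ (Pd,Qd)) * I (unitm k i i') $$ (Pm,Qm))"
    using b by (intro sum.cong refl, subst lin_expand[OF S Zc]) (auto simp: Z_def)
  also have "\<dots> = (\<Sum>j<n. \<Sum>j'<n. (\<Sum>i<k. \<Sum>i'<k. R $$ (j*k+i, j'*k+i') * I (unitm k i i') $$ (Pm,Qm)) * S (unitm n j j') $$ (Pd,Qd))"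
    unfolding sum_distrib_right sum4_swap[of _ "{..<k}" "{..<k}"]
    by (simp only: mult_ac)
  also have "\<dots> = (\<Sum>j<n. \<Sum>j'<n. I (mat k k (\<lambda>(i,i'). R $$ (j*k+i, j'*k+i'))) $$ (Pm,Qm) * S (unitm n j j') $$ (Pd,Qd))"
    using b by (intro sum.cong refl, subst lin_expand[OF I]) auto
  also have "\<dots> = S (mat n n (\<lambda>(j,j'). tensor_id_left n k K I R $$ (j*K + Pm, j'*K + Qm))) $$ (Pd,Qd)"
    using b by (subst lin_expand[OF S]) (auto simp: tensor_id_left_def idx_lt intro!: sum.cong)
  also have "\<dots> = tensor_id_right n N K S (tensor_id_left n k K I R) $$ (P,Q)"
    using PQ by (simp add: tensor_id_right_def Pd_Qd_Pm_Qm_def)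
  finally show "tensor_id_left N k K I (tensor_id_right n N k S R) $$ (P,Q) = tensor_id_right n N K S (tensor_id_left n k K I R) $$ (P,Q)" .
qed

lemma star_lin: "lin_map n (n*m) (star c n m \<Phi>)"
  unfolding lin_map_def
proof (intro conjI ballI allI)
  fix X :: "complex mat" assume X: "X \<in> carrier_mat n n"
  show "star c n m \<Phi> X \<in> carrier_mat (n*m) (n*m)" by simp
  fix a
  show "star c n m \<Phi> (a \<cdot>\<^sub>m X) = a \<cdot>\<^sub>m star c n m \<Phi> X"
  proof (rule eq_matI)
    fix p q assume "p < dim_row (a \<cdot>\<^sub>m star c n m \<Phi> X)" "q < dim_col (a \<cdot>\<^sub>m star c n m \<Phi> X)"
    hence pq: "p < n*m" "q < n*m" by auto
    note bnd = div_lt[OF pq(1)] div_lt[OF pq(2)] mod_lt[OF pq(1)] mod_lt[OF pq(2)]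
    have aX: "a \<cdot>\<^sub>m X \<in> carrier_mat n n" using X by simp
    show "star c n m \<Phi> (a \<cdot>\<^sub>m X) $$ (p,q) = (a \<cdot>\<^sub>m star c n m \<Phi> X) $$ (p,q)"
      using pq bnd X by (simp add: star_entry[OF aX pq] star_entry[OF X pq] sum_distrib_left algebra_simps)
  qed auto
next
  fix X Y :: "complex mat" assume X: "X \<in> carrier_mat n n" and Y: "Y \<in> carrier_mat n n"
  show "star c n m \<Phi> (X + Y) = star c n m \<Phi> X + star c n m \<Phi> Y"
  proof (rule eq_matI)
    fix p q assume "p < dim_row (star c n m \<Phi> X + star c n m \<Phi> Y)" "q < dim_col (star c n m \<Phi> X + star c n m \<Phi> Y)"
    hence pq: "p < n*m" "q < n*m" by auto
    note bnd = div_lt[OF pq(1)] div_lt[OF pq(2)] mod_lt[OF pq(1)] mod_lt[OF pq(2)]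
    have XY: "X + Y \<in> carrier_mat n n" using X Y by simp
    show "star c n m \<Phi> (X + Y) $$ (p,q) = (star c n m \<Phi> X + star c n m \<Phi> Y) $$ (p,q)"
      using pq bnd X Y by (simp add: star_entry[OF XY pq] star_entry[OF X pq] star_entry[OF Y pq] sum.distrib algebra_simps)
  qed auto
qed

lemma E_part2:
  assumes lin: "lin_map nA nB \<Phi>"
  shows "ptrace_fst nA (nB*nE) (tensor_id_right nA (nA*nB) nE (star c nA nB \<Phi>) R) = tensor_id_right nA nB nE \<Phi> R"
proof (rule eq_matI)
  show "dim_row (ptrace_fst nA (nB*nE) (tensor_id_right nA (nA*nB) nE (star c nA nB \<Phi>) R)) = dim_row (tensor_id_right nA nB nE \<Phi> R)"
       "dim_col (ptrace_fst nA (nB*nE) (tensor_id_right nA (nA*nB) nE (star c nA nB \<Phi>) R)) = dim_col (tensor_id_right nA nB nE \<Phi> R)"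
    by (simp_all add: ptrace_fst_def tensor_id_right_def)
  fix p q assume "p < dim_row (tensor_id_right nA nB nE \<Phi> R)" "q < dim_col (tensor_id_right nA nB nE \<Phi> R)"
  hence pq: "p < nB*nE" "q < nB*nE" by (simp_all add: tensor_id_right_def)
  note bnd = div_lt[OF pq(1)] div_lt[OF pq(2)] mod_lt[OF pq(1)] mod_lt[OF pq(2)]
  define Y where "Y = mat nA nA (\<lambda>(j,j'). R $$ (j*nE + p mod nE, j'*nE + q mod nE))"
  have Yc: "Y \<in> carrier_mat nA nA" by (simp add: Y_def)
  have e: "tensor_id_right nA (nA*nB) nE (star c nA nB \<Phi>) R $$ (i*(nB*nE)+p, i*(nB*nE)+q)
     = star c nA nB \<Phi> Y $$ (i*nB + p div nE, i*nB + q div nE)" if i: "i < nA" for i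
  proof -
    have eq: "i*(nB*nE)+p = (i*nB + p div nE)*nE + p mod nE" "i*(nB*nE)+q = (i*nB + q div nE)*nE + q mod nE"
      by (simp_all add: algebra_simps)
    have l: "(i*nB + p div nE) < nA*nB" "(i*nB + q div nE) < nA*nB" using i bnd by (simp_all add: idx_lt)
    have l2: "i*(nB*nE)+p < nA*nB*nE" "i*(nB*nE)+q < nA*nB*nE"
      using idx_lt[OF i pq(1)] idx_lt[OF i pq(2)] by (simp_all add: mult.assoc)
    show ?thesis using l l2 bnd unfolding tensor_id_right_def Y_def
      by (simp add: eq del: div_mult_mod_eq)
  qed
  have "ptrace_fst nA (nB*nE) (tensor_id_right nA (nA*nB) nE (star c nA nB \<Phi>) R) $$ (p,q)
     = (\<Sum>i<nA. star c nA nB \<Phi> Y $$ (i*nB + p div nE, i*nB + q div nE))"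
    using pq e by (simp add: ptrace_fst_def)
  also have "\<dots> = ptrace_fst nA nB (star c nA nB \<Phi> Y) $$ (p div nE, q div nE)"
    using bnd by (simp add: ptrace_fst_def)
  also have "\<dots> = \<Phi> Y $$ (p div nE, q div nE)" by (simp add: ptrace_fst_star[OF lin Yc])
  also have "\<dots> = tensor_id_right nA nB nE \<Phi> R $$ (p,q)"
    using pq by (simp add: tensor_id_right_def Y_def)
  finally show "ptrace_fst nA (nB*nE) (tensor_id_right nA (nA*nB) nE (star c nA nB \<Phi>) R) $$ (p,q) = tensor_id_right nA nB nE \<Phi> R $$ (p,q)" .
qed

lemma axiom_E_holds: "axiom_E c"
  unfolding axiom_E_def
proof (intro allI impI conjI)
  fix nA nB nE R \<Phi> \<I>
  assume ch: "channel nA nB \<Phi>" and ci: "cptni nE \<I>"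
  have "lin_map nE nE \<I>" using ci by (simp add: cptni_def cp_map_def)
  thus "tensor_id_left (nA*nB) nE nE \<I> (star_spec_right c nA nB nE \<Phi> R)
             = star_spec_right c nA nB nE \<Phi> (tensor_id_left nA nE nE \<I> R)"
    unfolding star_spec_right_def by (rule comm_tensor[OF star_lin])
next
  fix nA nB nE R \<Phi>
  assume ch: "channel nA nB \<Phi>"
  show "ptrace_fst nA (nB*nE) (star_spec_right c nA nB nE \<Phi> R) = tensor_id_right nA nB nE \<Phi> R"
    unfolding star_spec_right_def by (rule E_part2[OF channel_lin[OF ch]])
qed

lemma P_alg:
  fixes al be :: complex and r1 r2 :: "nat \<Rightarrow> complex" and K1 K2 :: "nat \<Rightarrow> nat \<Rightarrow> nat \<Rightarrow> complex" and G :: "nat \<Rightarrow> nat \<Rightarrow> complex"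
  shows "(\<Sum>i\<in>A. \<Sum>i'\<in>A. (al * (\<Sum>j\<in>B. r1 j * K1 j i i') + be * (\<Sum>j\<in>B. K2 j i i' * r2 j)) * G i i')
    = al * (\<Sum>j\<in>B. r1 j * (\<Sum>i\<in>A. \<Sum>i'\<in>A. K1 j i i' * G i i')) + be * (\<Sum>j\<in>B. (\<Sum>i\<in>A. \<Sum>i'\<in>A. K2 j i i' * G i i') * r2 j)"
proof -
  have "(\<Sum>i\<in>A. \<Sum>i'\<in>A. (al * (\<Sum>j\<in>B. r1 j * K1 j i i') + be * (\<Sum>j\<in>B. K2 j i i' * r2 j)) * G i i')
     = al * (\<Sum>i\<in>A. \<Sum>i'\<in>A. \<Sum>j\<in>B. r1 j * K1 j i i' * G i i') + be * (\<Sum>i\<in>A. \<Sum>i'\<in>A. \<Sum>j\<in>B. K2 j i i' * r2 j * G i i')"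
    by (simp only: distrib_right sum.distrib sum_distrib_left sum_distrib_right mult.assoc)
  also have "\<dots> = al * (\<Sum>j\<in>B. \<Sum>i\<in>A. \<Sum>i'\<in>A. r1 j * K1 j i i' * G i i') + be * (\<Sum>j\<in>B. \<Sum>i\<in>A. \<Sum>i'\<in>A. K2 j i i' * r2 j * G i i')"
    by (simp only: sum_swap3[of _ A A B])
  also have "\<dots> = al * (\<Sum>j\<in>B. r1 j * (\<Sum>i\<in>A. \<Sum>i'\<in>A. K1 j i i' * G i i')) + be * (\<Sum>j\<in>B. (\<Sum>i\<in>A. \<Sum>i'\<in>A. K2 j i i' * G i i') * r2 j)"
    by (simp only: sum_distrib_left sum_distrib_right mult_ac)
  finally show ?thesis .
qed

lemma star_P:
  assumes chE: "channel nA nB \<E>" and chF: "channel nB nC \<F>" and rc: "\<rho> \<in> carrier_mat nA nA"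
  shows "ptrace_mid nA nB nC (star_spec_left c nA nB nC \<F> (star c nA nB \<E> \<rho>)) = star c nA nC (\<F> \<circ> \<E>) \<rho>"
proof (rule eq_matI)
  show "dim_row (ptrace_mid nA nB nC (star_spec_left c nA nB nC \<F> (star c nA nB \<E> \<rho>))) = dim_row (star c nA nC (\<F> \<circ> \<E>) \<rho>)"
       "dim_col (ptrace_mid nA nB nC (star_spec_left c nA nB nC \<F> (star c nA nB \<E> \<rho>))) = dim_col (star c nA nC (\<F> \<circ> \<E>) \<rho>)"
    by (simp_all add: ptrace_mid_def)
  have linE: "lin_map nA nB \<E>" and linF: "lin_map nB nC \<F>" using chE chF by (simp_all add: channel_lin)
  fix p q assume "p < dim_row (star c nA nC (\<F> \<circ> \<E>) \<rho>)" "q < dim_col (star c nA nC (\<F> \<circ> \<E>) \<rho>)"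
  hence pq: "p < nA*nC" "q < nA*nC" by simp_all
  define a a' cc cc' where "a = p div nC" "a' = q div nC" "cc = p mod nC" "cc' = q mod nC"
  have b: "a < nA" "a' < nA" "cc < nC" "cc' < nC" using pq by (simp_all add: a_a'_cc_cc'_def div_lt mod_lt)
  define Y where "Y = mat nB nB (\<lambda>(i,i'). star c nA nB \<E> \<rho> $$ (a*nB+i, a'*nB+i'))"
  have Yc: "Y \<in> carrier_mat nB nB" by (simp add: Y_def)
  have e: "star_spec_left c nA nB nC \<F> (star c nA nB \<E> \<rho>) $$ (a*(nB*nC) + j*nC + cc, a'*(nB*nC) + j*nC + cc')
       = star c nB nC \<F> Y $$ (j*nC + cc, j*nC + cc')" if j: "j < nB" for j
  proof -
    have l: "j*nC + cc < nB*nC" "j*nC + cc' < nB*nC" using j b by (simp_all add: idx_lt)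
    have l2: "a*(nB*nC) + (j*nC + cc) < nA*(nB*nC)" "a'*(nB*nC) + (j*nC + cc') < nA*(nB*nC)"
      using idx_lt[OF b(1) l(1)] idx_lt[OF b(2) l(2)] by simp_all
    show ?thesis using l l2 unfolding star_spec_left_def tensor_id_left_def Y_def
      by (simp add: add.assoc)
  qed
  have "ptrace_mid nA nB nC (star_spec_left c nA nB nC \<F> (star c nA nB \<E> \<rho>)) $$ (p,q)
      = (\<Sum>j<nB. star c nB nC \<F> Y $$ (j*nC + cc, j*nC + cc'))"
    using pq e by (simp add: ptrace_mid_def a_a'_cc_cc'_def)
  also have "\<dots> = ptrace_fst nB nC (star c nB nC \<F> Y) $$ (cc,cc')"
    using b by (simp add: ptrace_fst_def)
  also have "\<dots> = \<F> Y $$ (cc,cc')" by (simp add: ptrace_fst_star[OF linF Yc])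
  also have "\<dots> = (\<Sum>i<nB. \<Sum>i'<nB. Y $$ (i,i') * \<F> (unitm nB i i') $$ (cc,cc'))"
    using b by (simp add: lin_expand[OF linF Yc])
  also have "\<dots> = (\<Sum>i<nB. \<Sum>i'<nB. (alpha c * (\<Sum>j<nA. \<rho> $$ (a, j) * kk \<E> nA j a' i i')
      + beta c * (\<Sum>j<nA. kk \<E> nA a j i i' * \<rho> $$ (j, a'))) * \<F> (unitm nB i i') $$ (cc,cc'))"
    using b rc by (intro sum.cong refl) (simp add: Y_def star_entry idx_lt)
  also have "\<dots> = alpha c * (\<Sum>j<nA. \<rho> $$ (a, j) * (\<Sum>i<nB. \<Sum>i'<nB. kk \<E> nA j a' i i' * \<F> (unitm nB i i') $$ (cc,cc')))
      + beta c * (\<Sum>j<nA. (\<Sum>i<nB. \<Sum>i'<nB. kk \<E> nA a j i i' * \<F> (unitm nB i i') $$ (cc,cc')) * \<rho> $$ (j, a'))"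
    by (rule P_alg)
  also have "\<dots> = alpha c * (\<Sum>j<nA. \<rho> $$ (a, j) * kk (\<F> \<circ> \<E>) nA j a' cc cc')
      + beta c * (\<Sum>j<nA. kk (\<F> \<circ> \<E>) nA a j cc cc' * \<rho> $$ (j, a'))"
    using b by (simp add: kk_def lin_expand[OF linF lin_carrier[OF linE unitm_carrier]])
  also have "\<dots> = star c nA nC (\<F> \<circ> \<E>) \<rho> $$ (p,q)"
    by (simp add: star_entry[OF rc pq] a_a'_cc_cc'_def)
  finally show "ptrace_mid nA nB nC (star_spec_left c nA nB nC \<F> (star c nA nB \<E> \<rho>)) $$ (p,q) = star c nA nC (\<F> \<circ> \<E>) \<rho> $$ (p,q)" .
qed

lemma sum_shift_split: "(\<Sum>k<a + (j::nat). f k) = (\<Sum>k<a. f k) + (\<Sum>cc<j. f (a + cc))"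
  by (induction j) (simp_all add: add.assoc)

lemma sum_split_prod: "(\<Sum>k<(d::nat)*m. f k) = (\<Sum>s<d. \<Sum>cc<m. f (s*m + cc))"
proof (induction d)
  case 0 then show ?case by simp
next
  case (Suc d)
  have "(\<Sum>k<Suc d * m. f k) = (\<Sum>k<d*m + m. f k)" by (simp add: add.commute)
  also have "\<dots> = (\<Sum>k<d*m. f k) + (\<Sum>cc<m. f (d*m + cc))" by (rule sum_shift_split)
  finally show ?case using Suc by simp
qed

lemma triple_entry:
  assumes "A \<in> carrier_mat n k" "B \<in> carrier_mat k l" "C \<in> carrier_mat l n'" "u < n" "v < n'"
  shows "(A * B * C) $$ (u,v) = (\<Sum>s<k. \<Sum>t<l. A $$ (u,s) * B $$ (s,t) * C $$ (t,v))"
proof -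
  have AB: "A * B \<in> carrier_mat n l" using assms by simp
  have "(A * B * C) $$ (u,v) = (\<Sum>t<l. (A * B) $$ (u,t) * C $$ (t,v))"
    by (rule mult_entry[OF AB assms(3,4,5)])
  also have "\<dots> = (\<Sum>t<l. (\<Sum>s<k. A $$ (u,s) * B $$ (s,t)) * C $$ (t,v))"
  proof (intro sum.cong refl)
    fix t assume "t \<in> {..<l}"
    thus "(A * B) $$ (u,t) * C $$ (t,v) = (\<Sum>s<k. A $$ (u,s) * B $$ (s,t)) * C $$ (t,v)"
      using mult_entry[OF assms(1,2,4), of t] by simp
  qed
  also have "\<dots> = (\<Sum>s<k. \<Sum>t<l. A $$ (u,s) * B $$ (s,t) * C $$ (t,v))"
    by (simp add: sum_distrib_right) (rule sum.swap)
  finally show ?thesis .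
qed

lemma triple_unit:
  assumes "A \<in> carrier_mat n k" "B \<in> carrier_mat k n'" "u < n" "u' < n'" "x < k" "y < k"
  shows "(A * unitm k x y * B) $$ (u,u') = A $$ (u,x) * B $$ (y,u')"
proof -
  have "(A * unitm k x y * B) $$ (u,u') = (\<Sum>s<k. \<Sum>t<k. A $$ (u,s) * unitm k x y $$ (s,t) * B $$ (t,u'))"
    by (rule triple_entry[OF assms(1) unitm_carrier assms(2,3,4)])
  also have "\<dots> = (\<Sum>s<k. \<Sum>t<k. if x = s \<and> y = t then A $$ (u,s) * B $$ (t,u') else 0)"
    by (intro sum.cong refl) (auto simp: unitm_def)
  also have "\<dots> = A $$ (u,x) * B $$ (y,u')" using assms by (simp add: delta2)
  finally show ?thesis .
qed

lemma adj_entry[simp]: "i < dim_col V \<Longrightarrow> j < dim_row V \<Longrightarrow> adj V $$ (i,j) = cnj (V $$ (j,i))"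
  by (simp add: adj_def)
lemma adj_dim[simp]: "dim_row (adj V) = dim_col V" "dim_col (adj V) = dim_row V"
  by (simp_all add: adj_def)
lemma adj_carrier: "V \<in> carrier_mat n d \<Longrightarrow> adj V \<in> carrier_mat d n"
  by (simp add: adj_def)

lemma mat_sum_mult_left:
  assumes "A \<in> carrier_mat n n" "\<forall>i\<in>I. f i \<in> carrier_mat n n"
  shows "A * mat_sum n n I f = mat_sum n n I (\<lambda>i. A * f i)"
proof (rule eq_matI)
  fix u v assume "u < dim_row (mat_sum n n I (\<lambda>i. A * f i))" "v < dim_col (mat_sum n n I (\<lambda>i. A * f i))"
  hence uv: "u < n" "v < n" by auto
  have "(A * mat_sum n n I f) $$ (u,v) = (\<Sum>t<n. A $$ (u,t) * (\<Sum>i\<in>I. f i $$ (t,v)))"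
    using uv by (simp add: mult_entry[OF assms(1) mat_sum_carrier uv])
  also have "\<dots> = (\<Sum>i\<in>I. \<Sum>t<n. A $$ (u,t) * f i $$ (t,v))"
    by (simp add: sum_distrib_left) (rule sum.swap)
  also have "\<dots> = (\<Sum>i\<in>I. (A * f i) $$ (u,v))"
    using assms uv by (intro sum.cong refl) (simp add: mult_entry[of A n n _ n])
  finally show "(A * mat_sum n n I f) $$ (u,v) = mat_sum n n I (\<lambda>i. A * f i) $$ (u,v)" using uv by simp
qed (use assms in auto)

lemma mat_sum_mult_right:
  assumes "A \<in> carrier_mat n n" "\<forall>i\<in>I. f i \<in> carrier_mat n n"
  shows "mat_sum n n I f * A = mat_sum n n I (\<lambda>i. f i * A)"
proof (rule eq_matI)
  fix u v assume "u < dim_row (mat_sum n n I (\<lambda>i. f i * A))" "v < dim_col (mat_sum n n I (\<lambda>i. f i * A))"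
  hence uv: "u < n" "v < n" by auto
  have "(mat_sum n n I f * A) $$ (u,v) = (\<Sum>t<n. (\<Sum>i\<in>I. f i $$ (u,t)) * A $$ (t,v))"
    using uv by (simp add: mult_entry[OF mat_sum_carrier assms(1) uv])
  also have "\<dots> = (\<Sum>i\<in>I. \<Sum>t<n. f i $$ (u,t) * A $$ (t,v))"
    by (simp add: sum_distrib_right) (rule sum.swap)
  also have "\<dots> = (\<Sum>i\<in>I. (f i * A) $$ (u,v))"
    using assms uv by (intro sum.cong refl) (simp add: mult_entry[of _ n n A n])
  finally show "(mat_sum n n I f * A) $$ (u,v) = mat_sum n n I (\<lambda>i. f i * A) $$ (u,v)" using uv by simp
qed (use assms in auto)

lemma CC_alg:
  fixes Vx Vy :: "nat \<Rightarrow> complex" and Vm Vc K :: "nat \<Rightarrow> nat \<Rightarrow> complex"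
  shows "(\<Sum>s\<in>S. \<Sum>t\<in>T. Vx s * (\<Sum>u\<in>U. \<Sum>u'\<in>U. Vm u t * Vc u' s * K u' u) * Vy t)
       = (\<Sum>u'\<in>U. \<Sum>u\<in>U. (\<Sum>s\<in>S. Vx s * Vc u' s) * K u' u * (\<Sum>t\<in>T. Vm u t * Vy t))"
proof -
  have "(\<Sum>s\<in>S. \<Sum>t\<in>T. Vx s * (\<Sum>u\<in>U. \<Sum>u'\<in>U. Vm u t * Vc u' s * K u' u) * Vy t)
      = (\<Sum>s\<in>S. \<Sum>t\<in>T. \<Sum>u\<in>U. \<Sum>u'\<in>U. Vx s * Vc u' s * K u' u * (Vm u t * Vy t))"
    by (simp only: sum_distrib_left sum_distrib_right mult_ac)
  also have "\<dots> = (\<Sum>u\<in>U. \<Sum>u'\<in>U. \<Sum>s\<in>S. \<Sum>t\<in>T. Vx s * Vc u' s * K u' u * (Vm u t * Vy t))"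
    by (rule sum4_swap)
  also have "\<dots> = (\<Sum>u'\<in>U. \<Sum>u\<in>U. \<Sum>s\<in>S. \<Sum>t\<in>T. Vx s * Vc u' s * K u' u * (Vm u t * Vy t))"
    by (rule sum.swap)
  also have "\<dots> = (\<Sum>u'\<in>U. \<Sum>u\<in>U. (\<Sum>s\<in>S. Vx s * Vc u' s) * K u' u * (\<Sum>t\<in>T. Vm u t * Vy t))"
    apply (simp only: sum_distrib_left sum_distrib_right)
    apply (rule sum.cong[OF refl])
    apply (rule sum.cong[OF refl])
    apply (rule sum.swap)
    done
  finally show ?thesis .
qed

lemma kron_entry:
  assumes "V \<in> carrier_mat n d" "x < n" "s < d" "b < m" "cc < m"
  shows "kron V (1\<^sub>m m) $$ (x*m+b, s*m+cc) = V $$ (x,s) * (if b = cc then 1 else 0)"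
  using assms by (simp add: kron_def idx_lt)

lemma kron_carrier: "V \<in> carrier_mat n d \<Longrightarrow> kron V (1\<^sub>m m) \<in> carrier_mat (n*m) (d*m)"
  by (simp add: kron_def)

lemma delta_sum4:
  fixes G :: "nat \<Rightarrow> nat \<Rightarrow> nat \<Rightarrow> nat \<Rightarrow> complex"
  assumes "b < m" "b' < m"
  shows "(\<Sum>s\<in>A. \<Sum>cc<m. \<Sum>t\<in>B. \<Sum>cc'<m. (if b = cc then 1 else 0) * (if b' = cc' then 1 else 0) * G s cc t cc')
       = (\<Sum>s\<in>A. \<Sum>t\<in>B. G s b t b')"
proof -
  have i1: "(\<Sum>cc'<m. (if b = cc then 1 else 0) * (if b' = cc' then 1 else 0) * G s cc t cc') = (if b = cc then G s cc t b' else 0)" for s cc t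
    using assms by (simp add: if_distrib[of "\<lambda>x. x * _"] cong: if_cong)
  have i2: "(\<Sum>cc<m. \<Sum>t\<in>B. (if b = cc then G s cc t b' else 0)) = (\<Sum>t\<in>B. G s b t b')" for s
  proof -
    have "(\<Sum>t\<in>B. (if b = cc then G s cc t b' else 0)) = (if b = cc then (\<Sum>t\<in>B. G s cc t b') else 0)" for cc
      by simp
    thus ?thesis using assms by simp
  qed
  show ?thesis by (simp only: i1 i2)
qed

lemma CC_block:
  assumes V: "V \<in> carrier_mat n d" and d: "0 < d" and lin: "lin_map n m \<Phi>"
    and xy: "x < n" "y < n" "b < m" "b' < m"
  shows "(kron V (1\<^sub>m m) * star c d m (\<lambda>Y. \<Phi> (V * Y * adj V)) ((1 / of_nat d) \<cdot>\<^sub>m 1\<^sub>m d) * adj (kron V (1\<^sub>m m))) $$ (x*m+b, y*m+b')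
     = (1 / of_nat d) * (V * adj V * mat n n (\<lambda>(a,a'). kk \<Phi> n a a' b b') * (V * adj V)) $$ (x,y)"
proof -
  let ?W = "kron V (1\<^sub>m m)"
  let ?S = "star c d m (\<lambda>Y. \<Phi> (V * Y * adj V)) ((1 / of_nat d) \<cdot>\<^sub>m 1\<^sub>m d)"
  let ?K = "mat n n (\<lambda>(a,a'). kk \<Phi> n a a' b b')"
  have W: "?W \<in> carrier_mat (n*m) (d*m)" by (rule kron_carrier[OF V])
  have aW: "adj ?W \<in> carrier_mat (d*m) (n*m)" by (rule adj_carrier[OF W])
  have S: "?S \<in> carrier_mat (d*m) (d*m)" by simp
  have aV: "adj V \<in> carrier_mat d n" by (rule adj_carrier[OF V])
  have X: "x*m+b < n*m" "y*m+b' < n*m" using xy by (simp_all add: idx_lt)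
  have Sent: "?S $$ (s*m+b, t*m+b') = (1 / of_nat d) * (\<Sum>u<n. \<Sum>u'<n. V $$ (u,t) * cnj (V $$ (u',s)) * kk \<Phi> n u' u b b')"
    if st: "s < d" "t < d" for s t
  proof -
    have "?S $$ (s*m+b, t*m+b') = (1 / of_nat d) * jamiolkowski d m (\<lambda>Y. \<Phi> (V * Y * adj V)) $$ (s*m+b, t*m+b')"
      using st xy by (simp add: star_J[OF d] idx_lt)
    also have "\<dots> = (1 / of_nat d) * \<Phi> (V * unitm d t s * adj V) $$ (b,b')"
      using st xy by (simp add: jam_entry kk_def)
    also have "\<Phi> (V * unitm d t s * adj V) $$ (b,b') = (\<Sum>u<n. \<Sum>u'<n. (V * unitm d t s * adj V) $$ (u,u') * \<Phi> (unitm n u u') $$ (b,b'))"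
      by (rule lin_expand[OF lin mult_carrier_mat[OF mult_carrier_mat[OF V unitm_carrier] aV] xy(3,4)])
    also have "\<dots> = (\<Sum>u<n. \<Sum>u'<n. V $$ (u,t) * cnj (V $$ (u',s)) * kk \<Phi> n u' u b b')"
      using st V aV by (intro sum.cong refl) (simp add: triple_unit[OF V aV] kk_def del: index_mult_mat)
    finally show ?thesis .
  qed
  have "(?W * ?S * adj ?W) $$ (x*m+b, y*m+b') = (\<Sum>k<d*m. \<Sum>l<d*m. ?W $$ (x*m+b,k) * ?S $$ (k,l) * adj ?W $$ (l,y*m+b'))"
    by (rule triple_entry[OF W S aW X])
  also have "\<dots> = (\<Sum>s<d. \<Sum>cc<m. \<Sum>t<d. \<Sum>cc'<m. ?W $$ (x*m+b,s*m+cc) * ?S $$ (s*m+cc,t*m+cc') * adj ?W $$ (t*m+cc',y*m+b'))"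
    by (simp only: sum_split_prod)
  also have "\<dots> = (\<Sum>s<d. \<Sum>cc<m. \<Sum>t<d. \<Sum>cc'<m. (if b = cc then 1 else 0) * (if b' = cc' then 1 else 0) * (V $$ (x,s) * ?S $$ (s*m+cc,t*m+cc') * cnj (V $$ (y,t))))"
  proof (intro sum.cong refl)
    fix s cc t cc' assume "s \<in> {..<d}" "cc \<in> {..<m}" "t \<in> {..<d}" "cc' \<in> {..<m}"
    hence h: "s < d" "cc < m" "t < d" "cc' < m" by auto
    have e1: "?W $$ (x*m+b,s*m+cc) = V $$ (x,s) * (if b = cc then 1 else 0)"
      by (rule kron_entry[OF V xy(1) h(1) xy(3) h(2)])
    have e2: "adj ?W $$ (t*m+cc',y*m+b') = cnj (V $$ (y,t) * (if b' = cc' then 1 else 0))"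
      using W h xy kron_entry[OF V xy(2) h(3) xy(4) h(4)] by (simp add: idx_lt)
    show "?W $$ (x*m+b,s*m+cc) * ?S $$ (s*m+cc,t*m+cc') * adj ?W $$ (t*m+cc',y*m+b') =
      (if b = cc then 1 else 0) * (if b' = cc' then 1 else 0) * (V $$ (x,s) * ?S $$ (s*m+cc,t*m+cc') * cnj (V $$ (y,t)))"
      unfolding e1 e2 by simp
  qed
  also have "\<dots> = (\<Sum>s<d. \<Sum>t<d. V $$ (x,s) * ?S $$ (s*m+b,t*m+b') * cnj (V $$ (y,t)))"
    by (rule delta_sum4[OF xy(3,4)])
  also have "\<dots> = (1 / of_nat d) * (\<Sum>s<d. \<Sum>t<d. V $$ (x,s) * (\<Sum>u<n. \<Sum>u'<n. V $$ (u,t) * cnj (V $$ (u',s)) * kk \<Phi> n u' u b b') * cnj (V $$ (y,t)))"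
    apply (subst sum_distrib_left, rule sum.cong[OF refl])
    apply (subst sum_distrib_left, rule sum.cong[OF refl])
    apply (subst Sent)
      apply simp_all
    done
  also have "\<dots> = (1 / of_nat d) * (\<Sum>u'<n. \<Sum>u<n. (\<Sum>s<d. V $$ (x,s) * cnj (V $$ (u',s))) * kk \<Phi> n u' u b b' * (\<Sum>t<d. V $$ (u,t) * cnj (V $$ (y,t))))"
    by (subst CC_alg) (rule refl)
  also have "\<dots> = (1 / of_nat d) * (V * adj V * ?K * (V * adj V)) $$ (x,y)"
  proof -
    have P: "V * adj V \<in> carrier_mat n n" using V aV by simp
    have Pe: "(V * adj V) $$ (i,j) = (\<Sum>s<d. V $$ (i,s) * cnj (V $$ (j,s)))" if "i < n" "j < n" for i j
      using mult_entry[OF V aV that] V that by simp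
      have Kc: "?K \<in> carrier_mat n n" by simp
      have "(V * adj V * ?K * (V * adj V)) $$ (x,y) = (\<Sum>u'<n. \<Sum>u<n. (V * adj V) $$ (x,u') * ?K $$ (u',u) * (V * adj V) $$ (u,y))"
        by (rule triple_entry[OF P Kc P xy(1,2)])
      also have "\<dots> = (\<Sum>u'<n. \<Sum>u<n. (\<Sum>s<d. V $$ (x,s) * cnj (V $$ (u',s))) * kk \<Phi> n u' u b b' * (\<Sum>t<d. V $$ (u,t) * cnj (V $$ (y,t))))"
        using xy by (intro sum.cong refl) (simp add: Pe)
      finally show ?thesis by simp
  qed
  finally show ?thesis .
qed

lemma mat_sum_cong: "(\<And>i. i \<in> I \<Longrightarrow> f i = g i) \<Longrightarrow> mat_sum n m I f = mat_sum n m I g"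
  unfolding mat_sum_def by (intro eq_matI) auto

lemma Kdec_alg:
  fixes F G :: "nat \<Rightarrow> nat \<Rightarrow> complex" and K :: "nat \<Rightarrow> nat \<Rightarrow> complex"
  shows "(\<Sum>u\<in>N. \<Sum>u'\<in>N. (\<Sum>i\<in>R. F i u * G i u') * K u' u) = (\<Sum>i\<in>R. \<Sum>s\<in>N. \<Sum>t\<in>N. G i s * K s t * F i t)"
proof -
  have "(\<Sum>i\<in>R. \<Sum>s\<in>N. \<Sum>t\<in>N. G i s * K s t * F i t) = (\<Sum>i\<in>R. \<Sum>t\<in>N. \<Sum>s\<in>N. G i s * K s t * F i t)"
    by (rule sum.cong[OF refl], rule sum.swap)
  also have "\<dots> = (\<Sum>t\<in>N. \<Sum>s\<in>N. \<Sum>i\<in>R. G i s * K s t * F i t)"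
    by (rule sum_swap3)
  also have "\<dots> = (\<Sum>u\<in>N. \<Sum>u'\<in>N. (\<Sum>i\<in>R. F i u * G i u') * K u' u)"
    by (simp only: sum_distrib_right) (simp only: mult_ac)
  finally show ?thesis by simp
qed

lemma CC_holds: "axiom_CC c"
  unfolding axiom_CC_def
proof (intro allI impI)
  fix n m r :: nat and d :: "nat \<Rightarrow> nat" and V :: "nat \<Rightarrow> complex mat" and \<Phi> :: "complex mat \<Rightarrow> complex mat" and p :: "nat \<Rightarrow> real"
  assume n: "0 < n" and m: "0 < m" and Vh: "\<forall>i<r. 0 < d i \<and> isometry n (d i) (V i)"
    and orth: "\<forall>i<r. \<forall>j<r. i \<noteq> j \<longrightarrow> adj (V i) * V j = 0\<^sub>m (d i) (d j)"
    and ch: "channel n m \<Phi>"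
    and inv: "\<forall>X \<in> carrier_mat n n. \<Phi> (mat_sum n n {..<r} (\<lambda>i. (V i * adj (V i)) * X * (V i * adj (V i)))) = \<Phi> X"
  have lin: "lin_map n m \<Phi>" by (rule channel_lin[OF ch])
  define P where "P i = V i * adj (V i)" for i
  define cf where "cf i = complex_of_real (p i / real (d i))" for i
  define \<rho> where "\<rho> = mat_sum n n {..<r} (\<lambda>i. cf i \<cdot>\<^sub>m P i)"
  have Vc: "V i \<in> carrier_mat n (d i)" if "i < r" for i using Vh that by (simp add: isometry_def)
  have VV: "adj (V i) * V i = 1\<^sub>m (d i)" if "i < r" for i using Vh that by (simp add: isometry_def)
  have aVc: "adj (V i) \<in> carrier_mat (d i) n" if "i < r" for i using adj_carrier[OF Vc[OF that]] .
  have Pc: "P i \<in> carrier_mat n n" if "i < r" for i using Vc[OF that] aVc[OF that] by (simp add: P_def)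
  have PP: "P j * P i = (if j = i then P i else 0\<^sub>m n n)" if "i < r" "j < r" for i j
  proof -
    have "P j * P i = V j * ((adj (V j) * V i) * adj (V i))"
    proof -
      have CD: "V i * adj (V i) \<in> carrier_mat n n" using Vc[OF that(1)] aVc[OF that(1)] by simp
      have "V j * adj (V j) * (V i * adj (V i)) = V j * (adj (V j) * (V i * adj (V i)))"
        by (rule assoc_mult_mat[OF Vc[OF that(2)] aVc[OF that(2)] CD])
      also have "adj (V j) * (V i * adj (V i)) = adj (V j) * V i * adj (V i)"
        by (rule assoc_mult_mat[OF aVc[OF that(2)] Vc[OF that(1)] aVc[OF that(1)], symmetric])
      finally show ?thesis unfolding P_def .
    qed
    also have "\<dots> = (if j = i then P i else 0\<^sub>m n n)"
    proof (cases "j = i")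
      case True
      thus ?thesis using VV[OF that(1)] Vc[OF that(1)] aVc[OF that(1)] by (simp add: P_def)
    next
      case False
      have z: "adj (V j) * V i = 0\<^sub>m (d j) (d i)" using orth that False by auto
      have "0\<^sub>m (d j) (d i) * adj (V i) = 0\<^sub>m (d j) n" by (rule left_mult_zero_mat[OF aVc[OF that(1)]])
      moreover have "V j * 0\<^sub>m (d j) n = 0\<^sub>m n n" by (rule right_mult_zero_mat[OF Vc[OF that(2)]])
      ultimately show ?thesis using False by (simp add: z)
    qed
    finally show ?thesis .
  qed
  have rc: "\<rho> \<in> carrier_mat n n" by (simp add: \<rho>_def)
  have rhoP: "\<rho> * P i = cf i \<cdot>\<^sub>m P i" "P i * \<rho> = cf i \<cdot>\<^sub>m P i" if i: "i < r" for i
  proof -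
    have "\<rho> * P i = mat_sum n n {..<r} (\<lambda>j. (cf j \<cdot>\<^sub>m P j) * P i)"
      unfolding \<rho>_def using Pc i by (intro mat_sum_mult_right) auto
    also have "\<dots> = cf i \<cdot>\<^sub>m P i"
    proof (rule eq_matI)
      fix u v assume "u < dim_row (cf i \<cdot>\<^sub>m P i)" "v < dim_col (cf i \<cdot>\<^sub>m P i)"
      hence uv: "u < n" "v < n" using Pc[OF i] by auto
      have "(\<Sum>j<r. ((cf j \<cdot>\<^sub>m P j) * P i) $$ (u,v)) = (\<Sum>j<r. if j = i then cf i * P i $$ (u,v) else 0)"
      proof (intro sum.cong refl)
        fix j assume "j \<in> {..<r}"
        hence j: "j < r" by simp
        have "(cf j \<cdot>\<^sub>m P j) * P i = cf j \<cdot>\<^sub>m (P j * P i)" by (rule mult_smult_assoc_mat[OF Pc[OF j] Pc[OF i]])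
        thus "((cf j \<cdot>\<^sub>m P j) * P i) $$ (u,v) = (if j = i then cf i * P i $$ (u,v) else 0)"
          using PP[OF i j] uv Pc[OF i] by auto
      qed
      also have "\<dots> = cf i * P i $$ (u,v)" using i by simp
      finally show "mat_sum n n {..<r} (\<lambda>j. (cf j \<cdot>\<^sub>m P j) * P i) $$ (u,v) = (cf i \<cdot>\<^sub>m P i) $$ (u,v)"
        using uv Pc[OF i] by simp
    qed (use Pc[OF i] in auto)
    finally show "\<rho> * P i = cf i \<cdot>\<^sub>m P i" .
    have "P i * \<rho> = mat_sum n n {..<r} (\<lambda>j. P i * (cf j \<cdot>\<^sub>m P j))"
      unfolding \<rho>_def using Pc i by (intro mat_sum_mult_left) auto
    also have "\<dots> = cf i \<cdot>\<^sub>m P i"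
    proof (rule eq_matI)
      fix u v assume "u < dim_row (cf i \<cdot>\<^sub>m P i)" "v < dim_col (cf i \<cdot>\<^sub>m P i)"
      hence uv: "u < n" "v < n" using Pc[OF i] by auto
      have "(\<Sum>j<r. (P i * (cf j \<cdot>\<^sub>m P j)) $$ (u,v)) = (\<Sum>j<r. if j = i then cf i * P i $$ (u,v) else 0)"
      proof (intro sum.cong refl)
        fix j assume "j \<in> {..<r}"
        hence j: "j < r" by simp
        have "P i * (cf j \<cdot>\<^sub>m P j) = cf j \<cdot>\<^sub>m (P i * P j)" by (rule mult_smult_distrib[OF Pc[OF i] Pc[OF j]])
        thus "(P i * (cf j \<cdot>\<^sub>m P j)) $$ (u,v) = (if j = i then cf i * P i $$ (u,v) else 0)"
          using PP[OF j i] uv Pc[OF i] by auto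
      qed
      also have "\<dots> = cf i * P i $$ (u,v)" using i by simp
      finally show "mat_sum n n {..<r} (\<lambda>j. P i * (cf j \<cdot>\<^sub>m P j)) $$ (u,v) = (cf i \<cdot>\<^sub>m P i) $$ (u,v)"
        using uv Pc[OF i] by simp
    qed (use Pc[OF i] in auto)
    finally show "P i * \<rho> = cf i \<cdot>\<^sub>m P i" .
  qed
  show "star c n m \<Phi> (mat_sum n n {..<r} (\<lambda>i. complex_of_real (p i / real (d i)) \<cdot>\<^sub>m (V i * adj (V i))))
        = mat_sum (n*m) (n*m) {..<r} (\<lambda>i. complex_of_real (p i) \<cdot>\<^sub>m
             (kron (V i) (1\<^sub>m m) *
              star c (d i) m (\<lambda>Y. \<Phi> (V i * Y * adj (V i))) ((1 / of_nat (d i)) \<cdot>\<^sub>m 1\<^sub>m (d i)) *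
              adj (kron (V i) (1\<^sub>m m))))"
    (is "?L = ?R")
  proof -
    have L: "?L = star c n m \<Phi> \<rho>" by (simp add: \<rho>_def cf_def P_def)
    have Mc: "kron (V i) (1\<^sub>m m) * star c (d i) m (\<lambda>Y. \<Phi> (V i * Y * adj (V i))) ((1 / of_nat (d i)) \<cdot>\<^sub>m 1\<^sub>m (d i)) *
              adj (kron (V i) (1\<^sub>m m)) \<in> carrier_mat (n*m) (n*m)" if i: "i < r" for i
      by (rule mult_carrier_mat[OF mult_carrier_mat[OF kron_carrier[OF Vc[OF i]] star_carrier] adj_carrier[OF kron_carrier[OF Vc[OF i]]]])
    show ?thesis unfolding L
    proof (rule eq_matI)
      show "dim_row (star c n m \<Phi> \<rho>) = dim_row ?R" "dim_col (star c n m \<Phi> \<rho>) = dim_col ?R" by simp_all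
      fix q1 q2 assume "q1 < dim_row ?R" "q2 < dim_col ?R"
      hence q: "q1 < n*m" "q2 < n*m" by simp_all
      define x y b1 b2 where "x = q1 div m" "y = q2 div m" "b1 = q1 mod m" "b2 = q2 mod m"
      have bd: "x < n" "y < n" "b1 < m" "b2 < m" using q by (simp_all add: x_y_b1_b2_def div_lt mod_lt)
      have qe: "q1 = x*m + b1" "q2 = y*m + b2" by (simp_all add: x_y_b1_b2_def)
      define Km where "Km = mat n n (\<lambda>(a,a'). kk \<Phi> n a a' b1 b2)"
      have Kc: "Km \<in> carrier_mat n n" by (simp add: Km_def)
      have PKPc: "P i * Km * P i \<in> carrier_mat n n" if "i < r" for i using Pc[OF that] Kc by simp
      have Kdec: "Km = mat_sum n n {..<r} (\<lambda>i. P i * Km * P i)"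
      proof (rule eq_matI)
        show "dim_row Km = dim_row (mat_sum n n {..<r} (\<lambda>i. P i * Km * P i))"
             "dim_col Km = dim_col (mat_sum n n {..<r} (\<lambda>i. P i * Km * P i))" by (simp_all add: Km_def)
        fix a a' assume "a < dim_row (mat_sum n n {..<r} (\<lambda>i. P i * Km * P i))" "a' < dim_col (mat_sum n n {..<r} (\<lambda>i. P i * Km * P i))"
        hence aa: "a < n" "a' < n" by simp_all
        have Mc: "mat_sum n n {..<r} (\<lambda>i. P i * unitm n a' a * P i) \<in> carrier_mat n n" by simp
        have "Km $$ (a,a') = \<Phi> (unitm n a' a) $$ (b1,b2)" using aa by (simp add: Km_def kk_def)
        also have "\<Phi> (unitm n a' a) = \<Phi> (mat_sum n n {..<r} (\<lambda>i. P i * unitm n a' a * P i))"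
          using inv unitm_carrier[of n a' a] unfolding P_def by simp
        also have "\<dots> $$ (b1,b2) = (\<Sum>u<n. \<Sum>u'<n. (mat_sum n n {..<r} (\<lambda>i. P i * unitm n a' a * P i)) $$ (u,u') * \<Phi> (unitm n u u') $$ (b1,b2))"
          by (rule lin_expand[OF lin Mc bd(3,4)])
        also have "\<dots> = (\<Sum>u<n. \<Sum>u'<n. (\<Sum>i<r. P i $$ (u,a') * P i $$ (a,u')) * kk \<Phi> n u' u b1 b2)"
        proof (intro sum.cong refl)
          fix u u' assume "u \<in> {..<n}" "u' \<in> {..<n}"
          hence uu: "u < n" "u' < n" by simp_all
          have "(\<Sum>i<r. (P i * unitm n a' a * P i) $$ (u,u')) = (\<Sum>i<r. P i $$ (u,a') * P i $$ (a,u'))"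
            by (intro sum.cong refl) (use triple_unit[OF Pc Pc uu aa(2,1)] in simp)
          thus "(mat_sum n n {..<r} (\<lambda>i. P i * unitm n a' a * P i)) $$ (u,u') * \<Phi> (unitm n u u') $$ (b1,b2)
              = (\<Sum>i<r. P i $$ (u,a') * P i $$ (a,u')) * kk \<Phi> n u' u b1 b2"
            using uu by (simp add: kk_def)
        qed
        also have "\<dots> = (\<Sum>i<r. \<Sum>s<n. \<Sum>t<n. P i $$ (a,s) * kk \<Phi> n s t b1 b2 * P i $$ (t,a'))"
          by (rule Kdec_alg)
        also have "\<dots> = (\<Sum>i<r. (P i * Km * P i) $$ (a,a'))"
        proof (intro sum.cong refl)
          fix i assume "i \<in> {..<r}"
          hence i: "i < r" by simp
          show "(\<Sum>s<n. \<Sum>t<n. P i $$ (a,s) * kk \<Phi> n s t b1 b2 * P i $$ (t,a')) = (P i * Km * P i) $$ (a,a')"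
            using triple_entry[OF Pc[OF i] Kc Pc[OF i] aa] by (simp add: Km_def)
        qed
        also have "\<dots> = mat_sum n n {..<r} (\<lambda>i. P i * Km * P i) $$ (a,a')" using aa by simp
        finally show "Km $$ (a,a') = mat_sum n n {..<r} (\<lambda>i. P i * Km * P i) $$ (a,a')" .
      qed
      have rK: "\<rho> * Km = mat_sum n n {..<r} (\<lambda>i. cf i \<cdot>\<^sub>m (P i * Km * P i))"
      proof -
        have "\<rho> * Km = mat_sum n n {..<r} (\<lambda>i. \<rho> * (P i * Km * P i))"
          by (subst Kdec, rule mat_sum_mult_left[OF rc]) (use PKPc in auto)
        also have "\<dots> = mat_sum n n {..<r} (\<lambda>i. cf i \<cdot>\<^sub>m (P i * Km * P i))"
        proof (rule mat_sum_cong)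
          fix i assume "i \<in> {..<r}"
          hence i: "i < r" by simp
          have PK: "P i * Km \<in> carrier_mat n n" using Pc[OF i] Kc by simp
          have "\<rho> * (P i * Km * P i) = \<rho> * (P i * Km) * P i" by (rule assoc_mult_mat[OF rc PK Pc[OF i], symmetric])
          also have "\<rho> * (P i * Km) = \<rho> * P i * Km" by (rule assoc_mult_mat[OF rc Pc[OF i] Kc, symmetric])
          also have "\<dots> = cf i \<cdot>\<^sub>m (P i * Km)" unfolding rhoP(1)[OF i] by (rule mult_smult_assoc_mat[OF Pc[OF i] Kc])
          also have "cf i \<cdot>\<^sub>m (P i * Km) * P i = cf i \<cdot>\<^sub>m (P i * Km * P i)" by (rule mult_smult_assoc_mat[OF PK Pc[OF i]])
          finally show "\<rho> * (P i * Km * P i) = cf i \<cdot>\<^sub>m (P i * Km * P i)" .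
        qed
        finally show ?thesis .
      qed
      have Kr: "Km * \<rho> = mat_sum n n {..<r} (\<lambda>i. cf i \<cdot>\<^sub>m (P i * Km * P i))"
      proof -
        have "Km * \<rho> = mat_sum n n {..<r} (\<lambda>i. (P i * Km * P i) * \<rho>)"
          by (subst Kdec, rule mat_sum_mult_right[OF rc]) (use PKPc in auto)
        also have "\<dots> = mat_sum n n {..<r} (\<lambda>i. cf i \<cdot>\<^sub>m (P i * Km * P i))"
        proof (rule mat_sum_cong)
          fix i assume "i \<in> {..<r}"
          hence i: "i < r" by simp
          have PK: "P i * Km \<in> carrier_mat n n" using Pc[OF i] Kc by simp
          have "(P i * Km * P i) * \<rho> = (P i * Km) * (P i * \<rho>)" by (rule assoc_mult_mat[OF PK Pc[OF i] rc])
          also have "\<dots> = cf i \<cdot>\<^sub>m (P i * Km * P i)" unfolding rhoP(2)[OF i] by (rule mult_smult_distrib[OF PK Pc[OF i]])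
          finally show "(P i * Km * P i) * \<rho> = cf i \<cdot>\<^sub>m (P i * Km * P i)" .
        qed
        finally show ?thesis .
      qed
      have "star c n m \<Phi> \<rho> $$ (q1,q2) = alpha c * (\<rho> * Km) $$ (x,y) + beta c * (Km * \<rho>) $$ (x,y)"
        unfolding star_entry[OF rc q] mult_entry[OF rc Kc bd(1,2)] mult_entry[OF Kc rc bd(1,2)]
        using bd by (simp add: x_y_b1_b2_def Km_def)
      also have "\<dots> = alpha c * (\<Sum>i<r. cf i * (P i * Km * P i) $$ (x,y)) + beta c * (\<Sum>i<r. cf i * (P i * Km * P i) $$ (x,y))"
      proof -
        have e: "(cf i \<cdot>\<^sub>m (P i * Km * P i)) $$ (x,y) = cf i * (P i * Km * P i) $$ (x,y)" if "i < r" for i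
          by (rule index_smult_mat(1)) (use PKPc[OF that] bd in auto)
        show ?thesis unfolding rK Kr using bd by (simp add: e)
      qed
      also have "\<dots> = (\<Sum>i<r. cf i * (P i * Km * P i) $$ (x,y))"
        by (simp only: distrib_right[symmetric] alpha_beta mult_1)
      also have "\<dots> = ?R $$ (q1,q2)"
      proof -
        have "?R $$ (q1,q2) = (\<Sum>i<r. complex_of_real (p i) * (kron (V i) (1\<^sub>m m) * star c (d i) m (\<lambda>Y. \<Phi> (V i * Y * adj (V i))) ((1 / of_nat (d i)) \<cdot>\<^sub>m 1\<^sub>m (d i)) *
              adj (kron (V i) (1\<^sub>m m))) $$ (x*m+b1, y*m+b2))"
        proof (rule trans[OF mat_sum_entry[OF q]], intro sum.cong refl)
          fix i assume "i \<in> {..<r}"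
          hence i: "i < r" by simp
          show "(complex_of_real (p i) \<cdot>\<^sub>m (kron (V i) (1\<^sub>m m) * star c (d i) m (\<lambda>Y. \<Phi> (V i * Y * adj (V i))) ((1 / of_nat (d i)) \<cdot>\<^sub>m 1\<^sub>m (d i)) *
              adj (kron (V i) (1\<^sub>m m)))) $$ (q1,q2) = complex_of_real (p i) * (kron (V i) (1\<^sub>m m) * star c (d i) m (\<lambda>Y. \<Phi> (V i * Y * adj (V i))) ((1 / of_nat (d i)) \<cdot>\<^sub>m 1\<^sub>m (d i)) *
              adj (kron (V i) (1\<^sub>m m))) $$ (x*m+b1, y*m+b2)"
            unfolding qe by (rule index_smult_mat(1)) (use Mc[OF i] q qe in auto)
        qed
        also have "\<dots> = (\<Sum>i<r. complex_of_real (p i) * ((1 / of_nat (d i)) * (P i * Km * P i) $$ (x,y)))"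
          using Vh bd by (intro sum.cong refl) (simp add: CC_block[OF Vc _ channel_lin[OF ch]] P_def Km_def)
        also have "\<dots> = (\<Sum>i<r. cf i * (P i * Km * P i) $$ (x,y))"
          by (intro sum.cong refl) (simp add: cf_def of_real_divide)
        finally show ?thesis by simp
      qed
      finally show "star c n m \<Phi> \<rho> $$ (q1,q2) = ?R $$ (q1,q2)" .
    qed
  qed
qed

theorem proposition9:
  fixes c :: real
  shows "state_over_time c \<and> axiom_H c \<and> axiom_E c \<and> axiom_P c \<and>
         axiom_CC c \<and> axiom_J c \<and> axiom_QC c"
proof (intro conjI)
  show "state_over_time c" unfolding state_over_time_def
    using ptrace_fst_star[OF channel_lin density_carrier] ptrace_snd_star[OF _ density_carrier] by simp
  show "axiom_H c" unfolding axiom_H_def using star_herm by blast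
  show "axiom_E c" by (rule axiom_E_holds)
  show "axiom_P c" unfolding axiom_P_def using star_P density_carrier by blast
  show "axiom_CC c" by (rule CC_holds)
  show "axiom_J c" unfolding axiom_J_def using star_J by blast
  show "axiom_QC c" unfolding axiom_QC_def
  proof (intro allI impI)
    fix n \<rho> assume n: "0 < (n::nat)" and d: "density n \<rho>"
    have rc: "\<rho> \<in> carrier_mat n n" by (rule density_carrier[OF d])
    show "\<exists>\<Theta>. lin_map n n \<Theta> \<and>
          (\<forall>m \<Phi>. 0 < m \<longrightarrow> channel n m \<Phi> \<longrightarrow>
             star c n m \<Phi> \<rho> =
               tensor_id_right n n m \<Theta> (of_nat n \<cdot>\<^sub>m star c n m \<Phi> ((1 / of_nat n) \<cdot>\<^sub>m 1\<^sub>m n))) \<and>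
          (\<forall>M \<in> carrier_mat n n. \<rho> * M = M * \<rho> \<longrightarrow> \<Theta> M = \<rho> * M)"
    proof (intro exI conjI allI impI ballI)
      show "lin_map n n (Theta c \<rho>)" by (rule Theta_lin[OF rc])
      fix M assume "M \<in> carrier_mat n n" "\<rho> * M = M * \<rho>"
      thus "Theta c \<rho> M = \<rho> * M" using Theta_comm[OF rc] by blast
    next
      fix m \<Phi>
      have "of_nat n \<cdot>\<^sub>m star c n m \<Phi> ((1 / of_nat n) \<cdot>\<^sub>m 1\<^sub>m n) = jamiolkowski n m \<Phi>"
        unfolding star_J[OF n] using n by (intro eq_matI) auto
      thus "star c n m \<Phi> \<rho> = tensor_id_right n n m (Theta c \<rho>) (of_nat n \<cdot>\<^sub>m star c n m \<Phi> ((1 / of_nat n) \<cdot>\<^sub>m 1\<^sub>m n))"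
        by (simp add: star_def)
    qed
  qed
qed

end
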